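(* Let $V,W$ satisfy (H1)–(H3) of the context and let $\beta_N>0$ with $\beta_N/(N\log N)\to\infty$. Let $\mu$ be a probability measure on $\mathbb{R}^d$ supported in a box $B=\prod_{i=1}^d[a_i,b_i]$, with density $h$ w.r.t. Lebesgue measure such that $\delta\leq h\leq\delta^{-1}$ on $B$ for some $\delta>0$. Then for every $r>0$, $$\liminf_{N\to\infty}\frac{\log Z_NQ_N(B(\mu,r))}{\beta_N}\geq-I(\mu),$$ where $B(\mu,r)=\{\nu:d_{\mathrm{FM}}(\mu,\nu)<r\}$.
   Context: (H1) $W:\mathbb{R}^d\times\mathbb{R}^d\to(-\infty,+\infty]$ continuous, symmetric, finite off the diagonal, and for each compact $K$, $z\mapsto\sup\{W(x,y):|x-y|\geq|z|,x,y\in K\}$ locally Lebesgue integrable; (H2) $V:\mathbb{R}^d\to\mathbb{R}$ continuous, $V(x)\to\infty$ as $|x|\to\infty$, $\int e^{-V}<\infty$; (H3) $W(x,y)\geq c-\varepsilon_o(V(x)+V(y))$ for some $c\in\mathbb{R}$, $\varepsilon_o\in(0,1)$. $H_N(x)=\frac1N\sum_iV(x_i)+\frac1{N^2}\sum_{i<j}W(x_i,x_j)$, $Z_N=\int e^{-\beta_NH_N}dx$, $P_N\propto e^{-\beta_NH_N}dx$, $Q_N$ the law of $\mu_N=\frac1N\sum_i\delta_{x_i}$ under $P_N$; $I(\mu)=\frac12\iint(V(x)+V(y)+W(x,y))d\mu d\mu$; $d_{\mathrm{FM}}$ the Fortet–Mourier distance $\sup\{\int fd\mu-\int fd\nu:\sup|f|\leq1,\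 f\ 1\text{-Lipschitz}\}$. *)

theory Defs
  imports "HOL-Probability.Probability"
begin

definition empirical :: "nat \<Rightarrow> (nat \<Rightarrow> 'a::euclidean_space) \<Rightarrow> 'a measure" where
  "empirical N x = distr (uniform_count_measure {..<N}) borel x"

definition dFM :: "'a::euclidean_space measure \<Rightarrow> 'a measure \<Rightarrow> real" where
  "dFM \<mu> \<nu> = (SUP f \<in> {f. (\<forall>x. \<bar>f x\<bar> \<le> 1) \<and> 1-lipschitz_on UNIV f}.
                 integral\<^sup>L \<mu> f - integral\<^sup>L \<nu> f)"

text \<open>Energy H_N; W takes values in (-infinity, +infinity], hence ereal.\<close>
definition HN :: "('a \<Rightarrow> real) \<Rightarrow> ('a \<Rightarrow> 'a \<Rightarrow> ereal) \<Rightarrow> nat \<Rightarrow> (nat \<Rightarrow> 'a) \<Rightarrow> ereal" where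
  "HN V W N x = ereal ((\<Sum>i<N. V (x i)) / real N)
      + (\<Sum>i<N. \<Sum>j\<in>{i<..<N}. W (x i) (x j)) / ereal ((real N)\<^sup>2)"

definition boltz :: "real \<Rightarrow> ereal \<Rightarrow> ennreal" where
  "boltz b H = (if H = \<infinity> then 0 else ennreal (exp (- b * real_of_ereal H)))"

definition ZQ :: "(nat \<Rightarrow> real) \<Rightarrow> ('a::euclidean_space \<Rightarrow> real) \<Rightarrow> ('a \<Rightarrow> 'a \<Rightarrow> ereal)
                   \<Rightarrow> nat \<Rightarrow> 'a measure set \<Rightarrow> ennreal" where
  "ZQ \<beta> V W N A = (\<integral>\<^sup>+ x. indicator {x. empirical N x \<in> A} x * boltz (\<beta> N) (HN V W N x)
                      \<partial>(\<Pi>\<^sub>M i\<in>{..<N}. (lborel :: 'a measure)))"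

definition eln :: "ennreal \<Rightarrow> ereal" where
  "eln z = (if z = 0 then - \<infinity> else if z = \<infinity> then \<infinity> else ereal (ln (enn2real z)))"

text \<open>I(mu) = 1/2 double integral of V(x)+V(y)+W(x,y), as (positive part - negative part).\<close>
definition Irate :: "('a::euclidean_space \<Rightarrow> real) \<Rightarrow> ('a \<Rightarrow> 'a \<Rightarrow> ereal) \<Rightarrow> 'a measure \<Rightarrow> ereal" where
  "Irate V W \<mu> =
     (let f = (\<lambda>p. ereal (V (fst p)) + ereal (V (snd p)) + W (fst p) (snd p)) in
      (enn2ereal (\<integral>\<^sup>+ p. e2ennreal (f p) \<partial>(\<mu> \<Otimes>\<^sub>M \<mu>))
       - enn2ereal (\<integral>\<^sup>+ p. e2ennreal (- f p) \<partial>(\<mu> \<Otimes>\<^sub>M \<mu>))) / 2)"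

definition Wsup :: "('a::euclidean_space \<Rightarrow> 'a \<Rightarrow> ereal) \<Rightarrow> 'a set \<Rightarrow> 'a \<Rightarrow> ereal" where
  "Wsup W K z = (SUP p \<in> {(x, y). x \<in> K \<and> y \<in> K \<and> norm (x - y) \<ge> norm z}. W (fst p) (snd p))"

end

theory Submission
  imports Defs
begin


lemma indicator_PiE_prod:
  assumes "x \<in> extensional I" "finite I"
  shows "indicator (PiE I A) x = (\<Prod>i\<in>I. indicator (A i) (x i) :: ennreal)"
proof (cases "\<forall>i\<in>I. x i \<in> A i")
  case True
  then have "x \<in> PiE I A" using assms by (auto simp: PiE_def extensional_def)
  then show ?thesis using True by auto
next
  case False
  then obtain i where "i \<in> I" "x i \<notin> A i" by auto
  then have "x \<notin> PiE I A" by auto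
  moreover have "(\<Prod>i\<in>I. indicator (A i) (x i) :: ennreal) = 0"
    using \<open>i \<in> I\<close> \<open>x i \<notin> A i\<close> assms(2) by (metis indicator_simps(2) prod_zero)
  ultimately show ?thesis by simp
qed

lemma PiM_density_eq:
  fixes f :: "'i \<Rightarrow> 'a::euclidean_space \<Rightarrow> ennreal"
  assumes fm[measurable]: "\<And>i. f i \<in> borel_measurable lborel"
   and fin: "\<And>i. sigma_finite_measure (density lborel (f i))"
   and I: "finite I"
  shows "PiM I (\<lambda>i. density lborel (f i)) = density (PiM I (\<lambda>i. lborel)) (\<lambda>x. \<Prod>i\<in>I. f i (x i))"
proof -
  interpret product_sigma_finite "\<lambda>i. density lborel (f i)"
    unfolding product_sigma_finite_def using fin by auto
  interpret L: product_sigma_finite "\<lambda>i. (lborel::'a measure)"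
    unfolding product_sigma_finite_def by (auto intro: lborel.sigma_finite_measure_axioms)
  have sets_eq: "sets (PiM I (\<lambda>i. density lborel (f i))) = sets (PiM I (\<lambda>i. (lborel::'a measure)))"
    by (intro sets_PiM_cong) auto
  show ?thesis
  proof (rule PiM_eqI[symmetric, OF I])
    show "sets (density (PiM I (\<lambda>i. lborel)) (\<lambda>x. \<Prod>i\<in>I. f i (x i))) = sets (PiM I (\<lambda>i. density lborel (f i)))"
      using sets_eq by simp
    fix A assume A: "\<And>i. i \<in> I \<Longrightarrow> A i \<in> sets (density lborel (f i))"
    have A': "PiE I A \<in> sets (PiM I (\<lambda>i. (lborel::'a measure)))"
      using A by (intro sets_PiM_I_finite I) auto
    have "emeasure (density (PiM I (\<lambda>i. lborel)) (\<lambda>x. \<Prod>i\<in>I. f i (x i))) (PiE I A)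
       = (\<integral>\<^sup>+ x. (\<Prod>i\<in>I. f i (x i)) * indicator (PiE I A) x \<partial>PiM I (\<lambda>i. lborel))"
      using A' by (subst emeasure_density) (auto intro!: borel_measurable_prod_ennreal)
    also have "\<dots> = (\<integral>\<^sup>+ x. (\<Prod>i\<in>I. f i (x i) * indicator (A i) (x i)) \<partial>PiM I (\<lambda>i. lborel))"
    proof (intro nn_integral_cong)
      fix x assume "x \<in> space (PiM I (\<lambda>i. (lborel::'a measure)))"
      then have "x \<in> extensional I" by (simp add: space_PiM PiE_iff)
      then show "(\<Prod>i\<in>I. f i (x i)) * indicator (PiE I A) x = (\<Prod>i\<in>I. f i (x i) * indicator (A i) (x i))"
        by (simp add: indicator_PiE_prod[OF _ I] prod.distrib)
    qed
    also have "\<dots> = (\<Prod>i\<in>I. \<integral>\<^sup>+ y. f i y * indicator (A i) y \<partial>lborel)"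
      using A by (intro L.product_nn_integral_prod I) auto
    also have "\<dots> = (\<Prod>i\<in>I. emeasure (density lborel (f i)) (A i))"
      using A by (intro prod.cong refl) (auto simp: emeasure_density)
    finally show "emeasure (density (PiM I (\<lambda>i. lborel)) (\<lambda>x. \<Prod>i\<in>I. f i (x i))) (PiE I A) = (\<Prod>i\<in>I. emeasure (density lborel (f i)) (A i))" .
  qed
qed



lemma distr_PiM_pair:
  assumes M: "\<And>i. i \<in> I \<Longrightarrow> prob_space (M i)" and ij: "i \<in> I" "j \<in> I" "i \<noteq> j"
  shows "distr (PiM I M) (M i \<Otimes>\<^sub>M M j) (\<lambda>x. (x i, x j)) = M i \<Otimes>\<^sub>M M j"
proof (rule pair_measure_eqI[symmetric])
  show "sigma_finite_measure (M i)" "sigma_finite_measure (M j)"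
    using M ij by (auto intro: prob_space_imp_sigma_finite)
  show "sets (M i \<Otimes>\<^sub>M M j) = sets (distr (PiM I M) (M i \<Otimes>\<^sub>M M j) (\<lambda>x. (x i, x j)))" by simp
  fix A B assume A: "A \<in> sets (M i)" and B: "B \<in> sets (M j)"
  have meas: "(\<lambda>x. (x i, x j)) \<in> PiM I M \<rightarrow>\<^sub>M M i \<Otimes>\<^sub>M M j"
    using ij by (intro measurable_Pair) auto
  have "(\<lambda>x. (x i, x j)) -` (A \<times> B) \<inter> space (PiM I M)
        = prod_emb I M {i,j} (PiE {i,j} (\<lambda>l. if l = i then A else B))"
    using ij by (auto simp: prod_emb_def space_PiM PiE_iff)
  then have "emeasure (distr (PiM I M) (M i \<Otimes>\<^sub>M M j) (\<lambda>x. (x i, x j))) (A \<times> B)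
      = emeasure (PiM I M) (prod_emb I M {i,j} (PiE {i,j} (\<lambda>l. if l = i then A else B)))"
    using A B meas by (subst emeasure_distr) auto
  also have "\<dots> = (\<Prod>l\<in>{i,j}. emeasure (M l) (if l = i then A else B))"
    using A B ij M by (intro emeasure_PiM_emb) auto
  also have "\<dots> = emeasure (M i) A * emeasure (M j) B"
    using ij by simp
  finally show "emeasure (M i) A * emeasure (M j) B = emeasure (distr (PiM I M) (M i \<Otimes>\<^sub>M M j) (\<lambda>x. (x i, x j))) (A \<times> B)" by simp
qed



lemma ennreal_integral_le_nn_integral:
  fixes T :: "'b \<Rightarrow> real"
  assumes "integrable P T"
  shows "ennreal (integral\<^sup>L P T) \<le> (\<integral>\<^sup>+ x. ennreal (T x) \<partial>P)"
proof -
  have "integral\<^sup>L P T \<le> enn2real (\<integral>\<^sup>+ x. ennreal (T x) \<partial>P)"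
    using real_lebesgue_integral_def[OF assms] by (simp add: enn2real_nonneg)
  then have "ennreal (integral\<^sup>L P T) \<le> ennreal (enn2real (\<integral>\<^sup>+ x. ennreal (T x) \<partial>P))"
    by (rule ennreal_leI)
  also have "\<dots> \<le> (\<integral>\<^sup>+ x. ennreal (T x) \<partial>P)"
    by (cases "(\<integral>\<^sup>+ x. ennreal (T x) \<partial>P)") auto
  finally show ?thesis .
qed

lemma jensen_exp:
  fixes Y :: "'b \<Rightarrow> real"
  assumes P: "prob_space P" and Y: "integrable P Y"
  shows "ennreal (exp (- b * integral\<^sup>L P Y)) \<le> (\<integral>\<^sup>+ x. ennreal (exp (- b * Y x)) \<partial>P)"
proof -
  interpret prob_space P by fact
  define m where "m = integral\<^sup>L P Y"
  define T where "T x = exp (- b * m) * (1 - b * (Y x - m))" for x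
  have pt: "T x \<le> exp (- b * Y x)" for x
  proof -
    have "1 - b * (Y x - m) \<le> exp (- b * (Y x - m))"
      using exp_ge_add_one_self[of "- b * (Y x - m)"] by simp
    then have "T x \<le> exp (- b * m) * exp (- b * (Y x - m))"
      unfolding T_def by (intro mult_left_mono) auto
    also have "\<dots> = exp (- b * Y x)" by (simp add: exp_add[symmetric] algebra_simps)
    finally show ?thesis .
  qed
  have Ti: "integrable P T" unfolding T_def using Y by auto
  have "integral\<^sup>L P T = exp (- b * m)"
    unfolding T_def using Y by (simp add: m_def algebra_simps prob_space)
  then have "ennreal (exp (- b * m)) \<le> (\<integral>\<^sup>+ x. ennreal (T x) \<partial>P)"
    using ennreal_integral_le_nn_integral[OF Ti] by simp
  also have "\<dots> \<le> (\<integral>\<^sup>+ x. ennreal (exp (- b * Y x)) \<partial>P)"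
    by (intro nn_integral_mono ennreal_leI pt)
  finally show ?thesis by (simp add: m_def)
qed



lemma exists_counts:
  fixes p :: "nat \<Rightarrow> real" and S :: "nat set"
  assumes S: "finite S" "k0 \<in> S" and p: "\<forall>k\<in>S. p k \<ge> 0" "sum p S = 1"
  shows "\<exists>n::nat\<Rightarrow>nat. sum n S = N \<and> (\<forall>k\<in>S. \<bar>real (n k) - real N * p k\<bar> \<le> real (card S))"
proof -
  define R where "R = S - {k0}"
  have R: "finite R" "k0 \<notin> R" "S = insert k0 R" using S by (auto simp: R_def)
  define fl where "fl k = nat \<lfloor>real N * p k\<rfloor>" for k
  have fl1: "real (fl k) \<le> real N * p k" if "k \<in> S" for k
    using p that by (simp add: fl_def)
  have fl2: "real N * p k - 1 \<le> real (fl k)" if "k \<in> S" for k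
    using p that by (simp add: fl_def)
  have sR: "real (sum fl R) \<le> real N * (1 - p k0)"
  proof -
    have "real (sum fl R) \<le> (\<Sum>k\<in>R. real N * p k)"
      unfolding of_nat_sum using R fl1 by (intro sum_mono) auto
    also have "\<dots> = real N * (1 - p k0)"
      using p(2) R by (simp add: sum_distrib_left[symmetric])
    finally show ?thesis .
  qed
  have sR2: "real N * (1 - p k0) - real (card R) \<le> real (sum fl R)"
  proof -
    have "(\<Sum>k\<in>R. real N * p k - 1) \<le> (\<Sum>k\<in>R. real (fl k))"
      using R fl2 by (intro sum_mono) auto
    moreover have "(\<Sum>k\<in>R. real N * p k - 1) = real N * (1 - p k0) - real (card R)"
      using p(2) R by (simp add: sum_subtractf sum_distrib_left[symmetric])
    ultimately show ?thesis by (simp add: of_nat_sum)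
  qed
  have "p k0 \<le> sum p S" using S p by (intro member_le_sum) auto
  then have pk0: "p k0 \<le> 1" using p by simp
  have le: "sum fl R \<le> N"
  proof -
    have "real (sum fl R) \<le> real N" using sR pk0 p S
      by (smt (verit, best) mult_left_le of_nat_0_le_iff)
    then show ?thesis by linarith
  qed
  define n where "n k = (if k = k0 then N - sum fl R else fl k)" for k
  have "sum n S = n k0 + sum n R" using R by simp
  also have "sum n R = sum fl R" using R by (intro sum.cong) (auto simp: n_def)
  finally have sumn: "sum n S = N" using le by (simp add: n_def)
  have cR: "card S = Suc (card R)" using R by simp
  have "\<bar>real (n k) - real N * p k\<bar> \<le> real (card S)" if k: "k \<in> S" for k
  proof (cases "k = k0")
    case True
    then have "real (n k) = real N - real (sum fl R)" using le by (simp add: n_def of_nat_diff)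
    then show ?thesis using sR sR2 True cR by (simp add: algebra_simps)
  next
    case False
    then show ?thesis using fl1[OF k] fl2[OF k] cR by (simp add: n_def)
  qed
  then show ?thesis using sumn by blast
qed

lemma exists_assignment_N:
  fixes n :: "nat \<Rightarrow> nat" and S :: "nat set"
  assumes S: "finite S" "k0 \<in> S" and sn: "sum n S = N"
  shows "\<exists>c::nat\<Rightarrow>nat. (\<forall>i. c i \<in> S) \<and> (\<forall>k\<in>S. card {i. i < N \<and> c i = k} = n k)"
proof -
  define T where "T = Sigma S (\<lambda>k. {..<n k})"
  have "card T = N" using S sn by (simp add: T_def card_SigmaI)
  moreover have "finite T" using S by (simp add: T_def)
  ultimately obtain g where g: "bij_betw g {..<N} T"
    by (metis card_lessThan finite_lessThan finite_same_card_bij)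
  define c where "c i = (if i < N then fst (g i) else k0)" for i
  have cS: "c i \<in> S" for i
  proof (cases "i < N")
    case True
    then have "g i \<in> T" using bij_betw_apply[OF g] by auto
    then show ?thesis using True by (auto simp: c_def T_def)
  qed (use S in \<open>auto simp: c_def\<close>)
  have "card {i. i < N \<and> c i = k} = n k" if k: "k \<in> S" for k
  proof -
    have eq: "{i. i < N \<and> c i = k} = {i\<in>{..<N}. g i \<in> {k} \<times> {..<n k}}"
    proof -
      have gT: "\<And>i. i < N \<Longrightarrow> g i \<in> T" using bij_betw_apply[OF g] by auto
      show ?thesis
      proof (intro set_eqI iffI)
        fix i assume "i \<in> {i. i < N \<and> c i = k}"
        then have "i < N" "fst (g i) = k" by (auto simp: c_def)
        moreover obtain u v where "g i = (u, v)" by force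
        ultimately show "i \<in> {i\<in>{..<N}. g i \<in> {k} \<times> {..<n k}}" using gT[of i] by (auto simp: T_def)
      qed (auto simp: c_def)

    qed
    have "g ` {i\<in>{..<N}. g i \<in> {k} \<times> {..<n k}} = {k} \<times> {..<n k}"
    proof
      show "g ` {i\<in>{..<N}. g i \<in> {k} \<times> {..<n k}} \<subseteq> {k} \<times> {..<n k}" by auto
      show "{k} \<times> {..<n k} \<subseteq> g ` {i\<in>{..<N}. g i \<in> {k} \<times> {..<n k}}"
      proof
        fix z assume z: "z \<in> {k} \<times> {..<n k}"
        then have "z \<in> T" using k by (auto simp: T_def)
        then obtain i where "i \<in> {..<N}" "z = g i" using g by (auto simp: bij_betw_def)
        then show "z \<in> g ` {i\<in>{..<N}. g i \<in> {k} \<times> {..<n k}}" using z by auto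
      qed
    qed
    moreover have "inj_on g {i\<in>{..<N}. g i \<in> {k} \<times> {..<n k}}"
      using g by (auto simp: bij_betw_def intro: inj_on_subset)
    ultimately have "card {i\<in>{..<N}. g i \<in> {k} \<times> {..<n k}} = card ({k} \<times> {..<n k})"
      using card_image[of g "{i\<in>{..<N}. g i \<in> {k} \<times> {..<n k}}"] by simp
    then show ?thesis using eq by simp
  qed
  then show ?thesis using cS by blast
qed

lemma exists_assignment:
  fixes p :: "nat \<Rightarrow> real" and S :: "nat set"
  assumes S: "finite S" "k0 \<in> S" and p: "\<forall>k\<in>S. p k \<ge> 0" "sum p S = 1"
  shows "\<exists>c::nat\<Rightarrow>nat\<Rightarrow>nat. (\<forall>N i. c N i \<in> S) \<and>
     (\<forall>k\<in>S. ((\<lambda>N. real (card {i. i < N \<and> c N i = k}) / real N) \<longlongrightarrow> p k) sequentially)"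
proof -
  have "\<forall>N. \<exists>c::nat\<Rightarrow>nat. (\<forall>i. c i \<in> S) \<and> (\<forall>k\<in>S. \<bar>real (card {i. i < N \<and> c i = k}) - real N * p k\<bar> \<le> real (card S))"
  proof
    fix N
    obtain n where n: "sum n S = N" "\<forall>k\<in>S. \<bar>real (n k) - real N * p k\<bar> \<le> real (card S)"
      using exists_counts[OF S p] by blast
    obtain c where cc: "(\<forall>i. c i \<in> S) \<and> (\<forall>k\<in>S. card {i. i < N \<and> c i = k} = n k)"
      using exists_assignment_N[OF S n(1)] by blast
    then show "\<exists>c::nat\<Rightarrow>nat. (\<forall>i. c i \<in> S) \<and> (\<forall>k\<in>S. \<bar>real (card {i. i < N \<and> c i = k}) - real N * p k\<bar> \<le> real (card S))"
      using n(2) cc by (intro exI[of _ c]) simp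
  qed
  then obtain c where c: "\<And>N. (\<forall>i. c N i \<in> S)"
    "\<And>N k. k \<in> S \<Longrightarrow> \<bar>real (card {i. i < N \<and> c N i = k}) - real N * p k\<bar> \<le> real (card S)"
    by metis
  have "((\<lambda>N. real (card {i. i < N \<and> c N i = k}) / real N) \<longlongrightarrow> p k) sequentially" if k: "k \<in> S" for k
  proof -
    have lim0: "((\<lambda>N. real (card S) / real N) \<longlongrightarrow> 0) sequentially"
      by (intro tendsto_divide_0[OF tendsto_const] filterlim_at_top_imp_at_infinity filterlim_real_sequentially)
    show ?thesis
    proof (rule tendsto_sandwich[where f="\<lambda>N. p k - real (card S) / real N" and h="\<lambda>N. p k + real (card S) / real N"])
      show "\<forall>\<^sub>F N in sequentially. p k - real (card S) / real N \<le> real (card {i. i < N \<and> c N i = k}) / real N"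
        using eventually_gt_at_top[of 0]
      proof eventually_elim
        case (elim N)
        have "(real N * p k - real (card S)) / real N \<le> real (card {i. i < N \<and> c N i = k}) / real N"
          using c(2)[OF k, of N] by (intro divide_right_mono) auto
        then show ?case using elim by (simp add: field_simps)
      qed
      show "\<forall>\<^sub>F N in sequentially. real (card {i. i < N \<and> c N i = k}) / real N \<le> p k + real (card S) / real N"
        using eventually_gt_at_top[of 0]
      proof eventually_elim
        case (elim N)
        have "real (card {i. i < N \<and> c N i = k}) / real N \<le> (real N * p k + real (card S)) / real N"
          using c(2)[OF k, of N] by (intro divide_right_mono) auto
        then show ?case using elim by (simp add: field_simps)
      qed
    qed (auto intro!: tendsto_eq_intros lim0[THEN tendsto_eq_rhs])
  qed
  then show ?thesis using c(1) by blast
qed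



lemma cells_exist:
  fixes K :: "'a::euclidean_space set"
  assumes K: "compact K" and e: "e > 0"
  obtains M :: nat and C where "\<And>k. k < M \<Longrightarrow> C k \<subseteq> K" "\<And>k. k < M \<Longrightarrow> C k \<in> sets borel"
    "\<And>k x y. k < M \<Longrightarrow> x \<in> C k \<Longrightarrow> y \<in> C k \<Longrightarrow> dist x y \<le> e"
    "disjoint_family_on C {..<M}" "(\<Union>k<M. C k) = K"
proof -
  have "K \<subseteq> (\<Union>x\<in>K. ball x (e/2))" using e by auto
  then obtain D where D: "D \<subseteq> K" "finite D" "K \<subseteq> (\<Union>x\<in>D. ball x (e/2))"
    using compactE_image[OF K, of K "\<lambda>x. ball x (e/2)"] by auto
  obtain xs where xs: "set xs = D" using D(2) finite_list by blast
  define M where "M = length xs"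
  define C where "C k = (K \<inter> ball (xs!k) (e/2)) - (\<Union>j<k. ball (xs!j) (e/2))" for k
  have sub: "C k \<subseteq> K" for k by (auto simp: C_def)
  have meas: "C k \<in> sets borel" for k
    unfolding C_def using K by (intro sets.Diff sets.Int sets.finite_UN) (auto intro: borel_compact)
  have diam: "dist x y \<le> e" if "x \<in> C k" "y \<in> C k" for x y k
  proof -
    have "dist x (xs!k) < e/2" "dist y (xs!k) < e/2" using that by (auto simp: C_def dist_commute)
    then show ?thesis using dist_triangle[of x y "xs!k"] by (simp add: dist_commute)
  qed
  have disj: "disjoint_family_on C {..<M}"
    unfolding disjoint_family_on_def
  proof (intro ballI impI)
    fix k l assume "k \<in> {..<M}" "l \<in> {..<M}" "k \<noteq> l"
    then consider "k < l" | "l < k" by linarith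
    then show "C k \<inter> C l = {}" by cases (auto simp: C_def)
  qed
  have cover: "(\<Union>k<M. C k) = K"
  proof
    show "(\<Union>k<M. C k) \<subseteq> K" using sub by auto
    show "K \<subseteq> (\<Union>k<M. C k)"
    proof
      fix x assume x: "x \<in> K"
      then obtain z where "z \<in> D" "x \<in> ball z (e/2)" using D by auto
      then obtain j where j: "j < M" "x \<in> ball (xs!j) (e/2)" using xs by (auto simp: M_def in_set_conv_nth)
      define k where "k = (LEAST j. j < M \<and> x \<in> ball (xs!j) (e/2))"
      have k: "k < M" "x \<in> ball (xs!k) (e/2)" using LeastI[of "\<lambda>j. j < M \<and> x \<in> ball (xs!j) (e/2)", OF conjI[OF j(1) j(2)]] by (auto simp: k_def)
      have "x \<notin> ball (xs!i) (e/2)" if "i < k" for i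
        using not_less_Least[of i "\<lambda>j. j < M \<and> x \<in> ball (xs!j) (e/2)"] that k by (auto simp: k_def)
      then have "x \<in> C k" using x k by (auto simp: C_def)
      then show "x \<in> (\<Union>k<M. C k)" using k by auto
    qed
  qed
  show ?thesis using that[of M C] sub meas diam disj cover by blast
qed



locale setting =
  fixes V :: "'a::euclidean_space \<Rightarrow> real" and W :: "'a \<Rightarrow> 'a \<Rightarrow> ereal"
    and h :: "'a \<Rightarrow> real" and \<mu> :: "'a measure" and a b :: 'a and \<delta> :: real
  assumes W_cont: "continuous_on UNIV (\<lambda>(x, y). W x y)"
    and W_sym: "\<And>x y. W x y = W y x"
    and V_cont: "continuous_on UNIV V"
    and H3: "\<exists>c \<epsilon>o. 0 < \<epsilon>o \<and> \<epsilon>o < 1 \<and> (\<forall>x y. W x y \<ge> ereal (c - \<epsilon>o * (V x + V y)))"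
    and h_meas: "h \<in> borel_measurable lborel"
    and mu_def: "\<mu> = density lborel (\<lambda>x. ennreal (h x))"
    and mu_prob: "prob_space \<mu>"
    and h_supp: "\<And>x. x \<notin> cbox a b \<Longrightarrow> h x = 0"
    and delta_pos: "\<delta> > 0"
    and h_bounds: "\<And>x. x \<in> cbox a b \<Longrightarrow> \<delta> \<le> h x \<and> h x \<le> 1 / \<delta>"
begin

lemma h_nonneg: "h x \<ge> 0"
  using h_supp h_bounds delta_pos by (cases "x \<in> cbox a b") (auto intro: order_trans[of 0 \<delta>])

lemma h_le: "h x \<le> 1 / \<delta>"
  using h_supp h_bounds delta_pos by (cases "x \<in> cbox a b") auto

lemma V_meas[measurable]: "V \<in> borel_measurable borel"
  by (rule borel_measurable_continuous_onI[OF V_cont])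

lemma W_meas_borel: "(\<lambda>p. W (fst p) (snd p)) \<in> borel_measurable borel"
proof -
  have "(\<lambda>(x, y). W x y) \<in> borel_measurable borel"
    by (rule borel_measurable_continuous_onI[OF W_cont])
  then show ?thesis by (simp add: case_prod_beta')
qed

lemma W_meas[measurable (raw)]:
  assumes [measurable]: "f \<in> borel_measurable M" "g \<in> borel_measurable M"
  shows "(\<lambda>x. W (f x) (g x)) \<in> borel_measurable M"
proof -
  have "(\<lambda>x. (f x, g x)) \<in> M \<rightarrow>\<^sub>M borel \<Otimes>\<^sub>M borel" by measurable
  then have m: "(\<lambda>x. (f x, g x)) \<in> M \<rightarrow>\<^sub>M (borel :: ('a \<times> 'a) measure)"
    by (simp add: borel_prod)
  show ?thesis using measurable_compose[OF m W_meas_borel] by simp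
qed

lemma compact_K: "compact (cbox a b)" by simp

definition Vb :: real where "Vb = (SOME B. B \<ge> 0 \<and> (\<forall>x\<in>cbox a b. \<bar>V x\<bar> \<le> B))"

lemma Vb_prop: "Vb \<ge> 0 \<and> (\<forall>x\<in>cbox a b. \<bar>V x\<bar> \<le> Vb)"
proof -
  have "bounded (V ` cbox a b)"
    by (intro compact_imp_bounded compact_continuous_image continuous_on_subset[OF V_cont]) auto
  then obtain B where "\<forall>x\<in>cbox a b. \<bar>V x\<bar> \<le> B" by (auto simp: bounded_iff)
  then have "max 0 B \<ge> 0 \<and> (\<forall>x\<in>cbox a b. \<bar>V x\<bar> \<le> max 0 B)" by auto
  then show ?thesis unfolding Vb_def by (rule someI)
qed

lemma Vb: "x \<in> cbox a b \<Longrightarrow> \<bar>V x\<bar> \<le> Vb" using Vb_prop by auto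

lemma Vb_nonneg: "Vb \<ge> 0" using Vb_prop by auto

definition WL :: real where "WL = (SOME L. L \<le> 0 \<and> (\<forall>x\<in>cbox a b. \<forall>y\<in>cbox a b. W x y \<ge> ereal L))"

lemma WL: "WL \<le> 0" "x \<in> cbox a b \<Longrightarrow> y \<in> cbox a b \<Longrightarrow> W x y \<ge> ereal WL"
proof -
  obtain c \<epsilon>o where ce: "0 < \<epsilon>o" "\<epsilon>o < 1" "\<And>x y. W x y \<ge> ereal (c - \<epsilon>o * (V x + V y))"
    using H3 by auto
  have "\<exists>L. L \<le> 0 \<and> (\<forall>x\<in>cbox a b. \<forall>y\<in>cbox a b. W x y \<ge> ereal L)"
  proof (intro exI[of _ "min 0 (c - 2 * Vb)"] conjI ballI)
    fix x y assume xy: "x \<in> cbox a b" "y \<in> cbox a b"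
    have "\<epsilon>o * (V x + V y) \<le> \<epsilon>o * (2 * Vb)"
      using Vb[OF xy(1)] Vb[OF xy(2)] ce by (intro mult_left_mono) auto
    also have "\<dots> \<le> 2 * Vb" using ce Vb_nonneg by (intro mult_left_le_one_le) auto
    finally have "min 0 (c - 2 * Vb) \<le> c - \<epsilon>o * (V x + V y)" by linarith
    then have "ereal (min 0 (c - 2 * Vb)) \<le> ereal (c - \<epsilon>o * (V x + V y))" by (simp only: ereal_less_eq)
    then show "ereal (min 0 (c - 2 * Vb)) \<le> W x y" using ce(3) order_trans by blast
  qed simp
  then have "WL \<le> 0 \<and> (\<forall>x\<in>cbox a b. \<forall>y\<in>cbox a b. W x y \<ge> ereal WL)"
    unfolding WL_def by (rule someI_ex)
  then show "WL \<le> 0" "x \<in> cbox a b \<Longrightarrow> y \<in> cbox a b \<Longrightarrow> W x y \<ge> ereal WL" by auto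
qed

lemma W_nmi: "W x y \<noteq> - \<infinity>"
proof -
  obtain c \<epsilon>o where "\<And>x y. W x y \<ge> ereal (c - \<epsilon>o * (V x + V y))"
    using H3 by auto
  then show ?thesis by (metis MInfty_neq_ereal(1) ereal_infty_less_eq(2))
qed

definition F :: "'a \<times> 'a \<Rightarrow> ereal" where
  "F p = ereal (V (fst p)) + ereal (V (snd p)) + W (fst p) (snd p)"

definition Gr :: "'a \<times> 'a \<Rightarrow> real" where
  "Gr p = V (fst p) + V (snd p) + real_of_ereal (W (fst p) (snd p))"

lemma F_meas[measurable]: "F \<in> borel_measurable (M1 \<Otimes>\<^sub>M M2)"
  if "sets M1 = sets borel" "sets M2 = sets borel" for M1 M2 :: "'a measure"
proof -
  have "F \<in> borel_measurable (borel \<Otimes>\<^sub>M borel)" unfolding F_def by measurable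
  then show ?thesis using that by (simp cong: measurable_cong_sets sets_pair_measure_cong)
qed

lemma Gr_meas[measurable]: "Gr \<in> borel_measurable (M1 \<Otimes>\<^sub>M M2)"
  if "sets M1 = sets borel" "sets M2 = sets borel" for M1 M2 :: "'a measure"
proof -
  have "Gr \<in> borel_measurable (borel \<Otimes>\<^sub>M borel)" unfolding Gr_def by measurable
  then show ?thesis using that by (simp cong: measurable_cong_sets sets_pair_measure_cong)
qed

lemma F_Gr: "W (fst p) (snd p) \<noteq> \<infinity> \<Longrightarrow> F p = ereal (Gr p)"
  using W_nmi[of "fst p" "snd p"] unfolding F_def Gr_def
  by (cases "W (fst p) (snd p)") auto

definition GL :: real where "GL = WL - 2 * Vb"

lemma Gr_lower: "fst p \<in> cbox a b \<Longrightarrow> snd p \<in> cbox a b \<Longrightarrow> Gr p \<ge> GL"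
proof -
  assume p: "fst p \<in> cbox a b" "snd p \<in> cbox a b"
  have w: "real_of_ereal (W (fst p) (snd p)) \<ge> WL"
    using WL(2)[OF p] WL(1) W_nmi[of "fst p" "snd p"]
    by (cases "W (fst p) (snd p)") auto
  show ?thesis using Vb[OF p(1)] Vb[OF p(2)] w by (simp add: Gr_def GL_def)
qed

lemma F_lower: "fst p \<in> cbox a b \<Longrightarrow> snd p \<in> cbox a b \<Longrightarrow> F p \<ge> ereal GL"
proof -
  assume p: "fst p \<in> cbox a b" "snd p \<in> cbox a b"
  show ?thesis
  proof (cases "W (fst p) (snd p) = \<infinity>")
    case True then show ?thesis by (simp add: F_def)
  next
    case False then show ?thesis using F_Gr Gr_lower[OF p] by simp
  qed
qed

lemma GL_nonpos: "GL \<le> 0" using WL(1) Vb_nonneg by (simp add: GL_def)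

end



lemma enn2ereal_fin: "x \<noteq> \<top> \<Longrightarrow> enn2ereal x = ereal (enn2real x)"
  by (cases x rule: ennreal_cases) auto

context setting
begin

lemma sets_mu[measurable_cong, simp]: "sets \<mu> = sets borel"
  by (simp add: mu_def)

lemma space_mu[simp]: "space \<mu> = UNIV"
  by (simp add: mu_def)

lemma h_meas'[measurable]: "h \<in> borel_measurable borel"
  using h_meas by simp

lemma emeasure_mu: "A \<in> sets borel \<Longrightarrow> emeasure \<mu> A = (\<integral>\<^sup>+ x. ennreal (h x) * indicator A x \<partial>lborel)"
  by (simp add: mu_def emeasure_density)

lemma mu_compl: "emeasure \<mu> (- cbox a b) = 0"
proof -
  have "emeasure \<mu> (- cbox a b) = (\<integral>\<^sup>+ x. ennreal (h x) * indicator (- cbox a b) x \<partial>lborel)"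
    by (intro emeasure_mu) auto
  also have "\<dots> = 0"
  proof -
    have eq: "(\<lambda>x. ennreal (h x) * indicator (- cbox a b) x) = (\<lambda>x. 0)" by (rule ext) (auto simp: indicator_def dest: h_supp)
    show ?thesis by (simp add: eq)
  qed
  finally show ?thesis .
qed

lemma AE_mu_K: "AE x in \<mu>. x \<in> cbox a b"
  by (rule AE_I'[of "- cbox a b"]) (auto simp: null_sets_def mu_compl)

sublocale mu: prob_space \<mu> by (rule mu_prob)

lemma AE_mu2_K: "AE p in \<mu> \<Otimes>\<^sub>M \<mu>. fst p \<in> cbox a b \<and> snd p \<in> cbox a b"
proof -
  interpret pp: pair_prob_space \<mu> \<mu> ..
  show ?thesis
  proof (rule pp.AE_pair_measure)
    show "{x \<in> space (\<mu> \<Otimes>\<^sub>M \<mu>). fst x \<in> cbox a b \<and> snd x \<in> cbox a b} \<in> sets (\<mu> \<Otimes>\<^sub>M \<mu>)"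
      by measurable
    show "AE x in \<mu>. AE y in \<mu>. fst (x, y) \<in> cbox a b \<and> snd (x, y) \<in> cbox a b"
      using AE_mu_K
    proof eventually_elim
      case (elim x)
      show ?case using AE_mu_K by eventually_elim (use elim in auto)
    qed
  qed
qed

lemma Irate_F: "Irate V W \<mu> = (enn2ereal (\<integral>\<^sup>+ p. e2ennreal (F p) \<partial>(\<mu> \<Otimes>\<^sub>M \<mu>))
       - enn2ereal (\<integral>\<^sup>+ p. e2ennreal (- F p) \<partial>(\<mu> \<Otimes>\<^sub>M \<mu>))) / 2"
  by (simp add: Irate_def F_def[abs_def] Let_def)

lemma negF_finite: "(\<integral>\<^sup>+ p. e2ennreal (- F p) \<partial>(\<mu> \<Otimes>\<^sub>M \<mu>)) \<le> ennreal (- GL)"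
proof -
  interpret pp: pair_prob_space \<mu> \<mu> ..
  have "(\<integral>\<^sup>+ p. e2ennreal (- F p) \<partial>(\<mu> \<Otimes>\<^sub>M \<mu>)) \<le> (\<integral>\<^sup>+ p. ennreal (- GL) \<partial>(\<mu> \<Otimes>\<^sub>M \<mu>))"
  proof (rule nn_integral_mono_AE)
    show "AE p in \<mu> \<Otimes>\<^sub>M \<mu>. e2ennreal (- F p) \<le> ennreal (- GL)"
      using AE_mu2_K
    proof eventually_elim
      case (elim p)
      then have "- F p \<le> - ereal GL" using F_lower[of p] by (simp only: ereal_minus_le_minus)
      then have "- F p \<le> ereal (- GL)" by simp
      then show ?case using e2ennreal_mono by fastforce
    qed
  qed
  also have "\<dots> = ennreal (- GL)"
    using prob_space.emeasure_space_1[OF prob_space_pair[OF mu_prob mu_prob]] by simp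
  finally show ?thesis .
qed

lemma Irate_inf:
  assumes "(\<integral>\<^sup>+ p. e2ennreal (F p) \<partial>(\<mu> \<Otimes>\<^sub>M \<mu>)) = \<infinity>"
  shows "Irate V W \<mu> = \<infinity>"
proof -
  have fin: "(\<integral>\<^sup>+ p. e2ennreal (- F p) \<partial>(\<mu> \<Otimes>\<^sub>M \<mu>)) \<noteq> \<top>"
    using negF_finite by (auto simp: top_unique)
  then obtain t where t: "enn2ereal (\<integral>\<^sup>+ p. e2ennreal (- F p) \<partial>(\<mu> \<Otimes>\<^sub>M \<mu>)) = ereal t"
    using enn2ereal_fin[OF fin] by blast
  have "enn2ereal (\<integral>\<^sup>+ p. e2ennreal (F p) \<partial>(\<mu> \<Otimes>\<^sub>M \<mu>)) = \<infinity>"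
    using assms by (simp add: enn2ereal_eq_top_iff)
  then show ?thesis unfolding Irate_F t by simp
qed

end



context setting
begin

lemma Irate_fin:
  assumes fin: "(\<integral>\<^sup>+ p. e2ennreal (F p) \<partial>(\<mu> \<Otimes>\<^sub>M \<mu>)) \<noteq> \<infinity>"
  shows "AE p in \<mu> \<Otimes>\<^sub>M \<mu>. W (fst p) (snd p) \<noteq> \<infinity>"
    and "integrable (\<mu> \<Otimes>\<^sub>M \<mu>) Gr"
    and "Irate V W \<mu> = ereal (integral\<^sup>L (\<mu> \<Otimes>\<^sub>M \<mu>) Gr / 2)"
proof -
  have Fm: "(\<lambda>p. e2ennreal (F p)) \<in> borel_measurable (\<mu> \<Otimes>\<^sub>M \<mu>)" by measurable
  have "AE p in \<mu> \<Otimes>\<^sub>M \<mu>. e2ennreal (F p) \<noteq> \<infinity>"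
    by (rule nn_integral_PInf_AE[OF Fm fin])
  then show AEW: "AE p in \<mu> \<Otimes>\<^sub>M \<mu>. W (fst p) (snd p) \<noteq> \<infinity>"
    by eventually_elim (auto simp: F_def)
  have AEF: "AE p in \<mu> \<Otimes>\<^sub>M \<mu>. F p = ereal (Gr p)"
    using AEW by eventually_elim (simp add: F_Gr)
  have bnd: "AE p in \<mu> \<Otimes>\<^sub>M \<mu>. ennreal (norm (Gr p)) \<le> e2ennreal (F p) + ennreal (- 2 * GL)"
    using AEF AE_mu2_K
  proof eventually_elim
    case (elim p)
    have lo: "Gr p \<ge> GL" using Gr_lower elim(2) by auto
    have "norm (Gr p) \<le> max 0 (Gr p) + (- 2 * GL)" using lo GL_nonpos by auto
    then have "ennreal (norm (Gr p)) \<le> ennreal (max 0 (Gr p) + (- 2 * GL))" by (rule ennreal_leI)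
    also have "\<dots> = ennreal (max 0 (Gr p)) + ennreal (- 2 * GL)"
      using GL_nonpos by (intro ennreal_plus) auto
    also have "ennreal (max 0 (Gr p)) = e2ennreal (F p)"
      using elim(1) by (simp add: e2ennreal_ereal ennreal_max_0)
    finally show ?case .
  qed
  have "(\<integral>\<^sup>+ p. ennreal (norm (Gr p)) \<partial>(\<mu> \<Otimes>\<^sub>M \<mu>)) \<le> (\<integral>\<^sup>+ p. e2ennreal (F p) + ennreal (- 2 * GL) \<partial>(\<mu> \<Otimes>\<^sub>M \<mu>))"
    by (rule nn_integral_mono_AE[OF bnd])
  also have "\<dots> = (\<integral>\<^sup>+ p. e2ennreal (F p) \<partial>(\<mu> \<Otimes>\<^sub>M \<mu>)) + ennreal (- 2 * GL)"
    using prob_space.emeasure_space_1[OF prob_space_pair[OF mu_prob mu_prob]] Fm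
    by (subst nn_integral_add) auto
  also have "\<dots> < \<infinity>" using fin by (simp add: less_top)
  finally have "(\<integral>\<^sup>+ p. ennreal (norm (Gr p)) \<partial>(\<mu> \<Otimes>\<^sub>M \<mu>)) < \<infinity>" .
  then show int: "integrable (\<mu> \<Otimes>\<^sub>M \<mu>) Gr"
    by (subst integrable_iff_bounded) auto
  have A: "(\<integral>\<^sup>+ p. e2ennreal (F p) \<partial>(\<mu> \<Otimes>\<^sub>M \<mu>)) = (\<integral>\<^sup>+ p. ennreal (Gr p) \<partial>(\<mu> \<Otimes>\<^sub>M \<mu>))"
    using AEF by (intro nn_integral_cong_AE) (auto simp: e2ennreal_ereal)
  have B: "(\<integral>\<^sup>+ p. e2ennreal (- F p) \<partial>(\<mu> \<Otimes>\<^sub>M \<mu>)) = (\<integral>\<^sup>+ p. ennreal (- Gr p) \<partial>(\<mu> \<Otimes>\<^sub>M \<mu>))"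
    using AEF by (intro nn_integral_cong_AE) (auto simp: e2ennreal_ereal)
  have Afin: "(\<integral>\<^sup>+ p. ennreal (Gr p) \<partial>(\<mu> \<Otimes>\<^sub>M \<mu>)) \<noteq> \<top>" using fin A by simp
  have Bfin: "(\<integral>\<^sup>+ p. ennreal (- Gr p) \<partial>(\<mu> \<Otimes>\<^sub>M \<mu>)) \<noteq> \<top>"
    using negF_finite B by (auto simp: top_unique)
  show "Irate V W \<mu> = ereal (integral\<^sup>L (\<mu> \<Otimes>\<^sub>M \<mu>) Gr / 2)"
    unfolding Irate_F A B enn2ereal_fin[OF Afin] enn2ereal_fin[OF Bfin] real_lebesgue_integral_def[OF int]
    by simp
qed

end



locale setting2 = setting +
  fixes M :: nat and C :: "nat \<Rightarrow> 'a set" and e :: real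
  assumes C_sub: "\<And>k. k < M \<Longrightarrow> C k \<subseteq> cbox a b"
    and C_meas: "\<And>k. k < M \<Longrightarrow> C k \<in> sets borel"
    and C_diam: "\<And>k x y. k < M \<Longrightarrow> x \<in> C k \<Longrightarrow> y \<in> C k \<Longrightarrow> dist x y \<le> e"
    and C_disj: "disjoint_family_on C {..<M}"
    and C_cover: "(\<Union>k<M. C k) = cbox a b"
begin

definition p :: "nat \<Rightarrow> real" where "p k = measure \<mu> (C k)"
definition S :: "nat set" where "S = {k. k < M \<and> p k > 0}"
definition \<nu> :: "nat \<Rightarrow> 'a measure" where
  "\<nu> k = density \<mu> (\<lambda>x. ennreal (indicator (C k) x / p k))"

lemma S_sub: "S \<subseteq> {..<M}" and finite_S: "finite S" and p_pos: "k \<in> S \<Longrightarrow> p k > 0"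
  and S_lt: "k \<in> S \<Longrightarrow> k < M"
  by (auto simp: S_def intro: finite_subset[of _ "{..<M}"])

lemma p_nonneg: "p k \<ge> 0" by (simp add: p_def)

lemma mu_K_1: "measure \<mu> (cbox a b) = 1"
proof -
  have "measure \<mu> (space \<mu> - cbox a b) = 1 - measure \<mu> (cbox a b)"
    by (rule prob_space.prob_compl[OF mu_prob]) auto
  moreover have "measure \<mu> (space \<mu> - cbox a b) = 0"
    using mu_compl by (simp add: measure_def Compl_eq_Diff_UNIV)
  ultimately show ?thesis by simp
qed

lemma sum_p_M: "(\<Sum>k<M. p k) = 1"
proof -
  have "measure \<mu> (\<Union>k\<in>{..<M}. C k) = (\<Sum>k<M. measure \<mu> (C k))"
    using C_meas C_disj by (intro measure_finite_Union) (auto simp: mu.emeasure_eq_measure)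
  then show ?thesis using C_cover mu_K_1 by (simp add: p_def)
qed

lemma sum_p: "(\<Sum>k\<in>S. p k) = 1"
proof -
  have "(\<Sum>k<M. p k) = (\<Sum>k\<in>S. p k)"
    using S_sub p_nonneg by (intro sum.mono_neutral_right) (auto simp: S_def less_le)
  then show ?thesis using sum_p_M by simp
qed

lemma S_ne: "S \<noteq> {}" using sum_p by auto

lemma null_C: "k < M \<Longrightarrow> k \<notin> S \<Longrightarrow> C k \<in> null_sets \<mu>"
proof -
  assume k: "k < M" "k \<notin> S"
  then have "p k = 0" using p_nonneg[of k] by (auto simp: S_def)
  then show ?thesis using C_meas[OF k(1)] by (simp add: null_sets_def p_def mu.emeasure_eq_measure)
qed

lemma AE_mu_U: "AE x in \<mu>. \<exists>k\<in>S. x \<in> C k"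
proof -
  have "AE x in \<mu>. \<forall>k\<in>{..<M} - S. x \<notin> C k"
  proof (subst AE_finite_all)
    show "\<forall>k\<in>{..<M} - S. AE x in \<mu>. x \<notin> C k"
    proof
      fix k assume k: "k \<in> {..<M} - S"
      show "AE x in \<mu>. x \<notin> C k"
        by (rule AE_I'[OF null_C]) (use k in auto)
    qed
  qed auto
  then show ?thesis using AE_mu_K
  proof eventually_elim
    case (elim x)
    then obtain k where "k < M" "x \<in> C k" using C_cover by blast
    then show ?case using elim(1) by (auto intro!: bexI[of _ k])
  qed
qed

lemma C_meas_S[measurable]: "k \<in> S \<Longrightarrow> C k \<in> sets borel"
  using C_meas S_lt by auto

lemma sets_nu[measurable_cong]: "sets (\<nu> k) = sets borel"
  by (simp add: \<nu>_def)

lemma space_nu[simp]: "space (\<nu> k) = UNIV"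
  by (simp add: \<nu>_def)

lemma prob_nu: "k \<in> S \<Longrightarrow> prob_space (\<nu> k)"
proof
  assume k: "k \<in> S"
  have "emeasure (\<nu> k) (space (\<nu> k)) = (\<integral>\<^sup>+ x. ennreal (indicator (C k) x / p k) \<partial>\<mu>)"
    using k by (simp add: \<nu>_def emeasure_density)
  also have "\<dots> = (\<integral>\<^sup>+ x. ennreal (1 / p k) * indicator (C k) x \<partial>\<mu>)"
    by (intro nn_integral_cong) (auto simp: indicator_def)
  also have "\<dots> = ennreal (1 / p k) * emeasure \<mu> (C k)"
    using k by (subst nn_integral_cmult_indicator) auto
  also have "\<dots> = 1"
    using p_pos[OF k] by (simp add: mu.emeasure_eq_measure p_def[symmetric] ennreal_mult[symmetric])
  finally show "emeasure (\<nu> k) (space (\<nu> k)) = 1" .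
qed

lemma nu_lborel: "k \<in> S \<Longrightarrow> \<nu> k = density lborel (\<lambda>x. ennreal (h x * indicator (C k) x / p k))"
proof -
  assume k: "k \<in> S"
  have eq: "\<And>f. density \<mu> f = density (density lborel (\<lambda>x. ennreal (h x))) f" by (simp add: mu_def)
  have [measurable]: "C k \<in> sets borel" using k by simp
  have "\<nu> k = density lborel (\<lambda>x. ennreal (h x) * ennreal (indicator (C k) x / p k))"
    unfolding \<nu>_def eq using k by (subst density_density_eq) auto
  also have "\<dots> = density lborel (\<lambda>x. ennreal (h x * indicator (C k) x / p k))"
    using h_nonneg p_nonneg by (intro density_cong) (auto simp: ennreal_mult[symmetric])
  finally show ?thesis .
qed

lemma AE_nu: "k \<in> S \<Longrightarrow> AE x in \<nu> k. x \<in> C k"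
  unfolding \<nu>_def by (subst AE_density) (auto simp: indicator_def)

definition dd :: "nat \<Rightarrow> nat \<Rightarrow> 'a \<times> 'a \<Rightarrow> real" where
  "dd k l q = indicator (C k) (fst q) * indicator (C l) (snd q) / (p k * p l)"

lemma dd_meas: assumes "k \<in> S" "l \<in> S" shows "dd k l \<in> borel_measurable (\<mu> \<Otimes>\<^sub>M \<mu>)"
proof -
  have [measurable]: "C k \<in> sets borel" "C l \<in> sets borel" using assms by auto
  show ?thesis unfolding dd_def by measurable
qed

lemma nu_pair: "k \<in> S \<Longrightarrow> l \<in> S \<Longrightarrow> \<nu> k \<Otimes>\<^sub>M \<nu> l = density (\<mu> \<Otimes>\<^sub>M \<mu>) (\<lambda>q. ennreal (dd k l q))"
proof -
  assume k: "k \<in> S" and l: "l \<in> S"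
  interpret nl: prob_space "\<nu> l" using prob_nu[OF l] .
  have "\<nu> k \<Otimes>\<^sub>M \<nu> l = density (\<mu> \<Otimes>\<^sub>M \<mu>) (\<lambda>(x, y). ennreal (indicator (C k) x / p k) * ennreal (indicator (C l) y / p l))"
    unfolding \<nu>_def using k l
    by (intro pair_measure_density) (auto simp: \<nu>_def[symmetric] mu.sigma_finite_measure_axioms nl.sigma_finite_measure_axioms)
  also have "\<dots> = density (\<mu> \<Otimes>\<^sub>M \<mu>) (\<lambda>q. ennreal (dd k l q))"
    using p_nonneg k l dd_meas[OF k l] by (intro density_cong) (auto simp: dd_def ennreal_mult[symmetric] split: prod.splits)
  finally show ?thesis .
qed

end



locale setting3 = setting2 +
  assumes Ffin: "(\<integral>\<^sup>+ p. e2ennreal (F p) \<partial>(\<mu> \<Otimes>\<^sub>M \<mu>)) \<noteq> \<infinity>"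
begin

lemma int_Gr: "integrable (\<mu> \<Otimes>\<^sub>M \<mu>) Gr" using Irate_fin(2)[OF Ffin] .
lemma AE_W: "AE q in \<mu> \<Otimes>\<^sub>M \<mu>. W (fst q) (snd q) \<noteq> \<infinity>" using Irate_fin(1)[OF Ffin] .
lemma Irate_eq: "Irate V W \<mu> = ereal (integral\<^sup>L (\<mu> \<Otimes>\<^sub>M \<mu>) Gr / 2)" using Irate_fin(3)[OF Ffin] .

lemma Gr_meas'[measurable]: "Gr \<in> borel_measurable (\<mu> \<Otimes>\<^sub>M \<mu>)" by simp

lemma dd_nonneg: "dd k l q \<ge> 0" using p_nonneg by (simp add: dd_def)

lemma dd_le: "k \<in> S \<Longrightarrow> l \<in> S \<Longrightarrow> dd k l q \<le> 1 / (p k * p l)"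
  using p_pos[of k] p_pos[of l] by (auto simp: dd_def indicator_def divide_right_mono)

lemma int_dd_Gr: assumes k: "k \<in> S" and l: "l \<in> S"
  shows "integrable (\<mu> \<Otimes>\<^sub>M \<mu>) (\<lambda>q. dd k l q *\<^sub>R Gr q)"
proof (rule Bochner_Integration.integrable_bound)
  show "integrable (\<mu> \<Otimes>\<^sub>M \<mu>) (\<lambda>q. (1 / (p k * p l)) * norm (Gr q))"
    using int_Gr by (intro integrable_mult_right) auto
  show "(\<lambda>q. dd k l q *\<^sub>R Gr q) \<in> borel_measurable (\<mu> \<Otimes>\<^sub>M \<mu>)"
    using dd_meas[OF k l] by measurable
  show "AE q in \<mu> \<Otimes>\<^sub>M \<mu>. norm (dd k l q *\<^sub>R Gr q) \<le> norm ((1 / (p k * p l)) * norm (Gr q))"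
  proof (intro AE_I2)
    fix q
    have "norm (dd k l q *\<^sub>R Gr q) = dd k l q * norm (Gr q)" using dd_nonneg[of k l q] by (simp add: abs_mult)
    also have "\<dots> \<le> (1 / (p k * p l)) * norm (Gr q)" using dd_le[OF k l] by (intro mult_right_mono) auto
    finally show "norm (dd k l q *\<^sub>R Gr q) \<le> norm ((1 / (p k * p l)) * norm (Gr q))"
      using p_pos[OF k] p_pos[OF l] by simp
  qed
qed

lemma int_pair: assumes k: "k \<in> S" and l: "l \<in> S" shows "integrable (\<nu> k \<Otimes>\<^sub>M \<nu> l) Gr"
proof -
  have "integrable (\<mu> \<Otimes>\<^sub>M \<mu>) (\<lambda>q. dd k l q * Gr q)" using int_dd_Gr[OF k l] by simp
  then show ?thesis using k l by (simp add: nu_pair integrable_density dd_meas dd_nonneg)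
qed

definition g :: "nat \<Rightarrow> nat \<Rightarrow> real" where "g k l = integral\<^sup>L (\<nu> k \<Otimes>\<^sub>M \<nu> l) Gr"

lemma g_eq: "k \<in> S \<Longrightarrow> l \<in> S \<Longrightarrow> g k l = integral\<^sup>L (\<mu> \<Otimes>\<^sub>M \<mu>) (\<lambda>q. dd k l q *\<^sub>R Gr q)"
  by (simp add: g_def nu_pair integral_density dd_meas dd_nonneg)

lemma AE_W_pair: assumes k: "k \<in> S" and l: "l \<in> S"
  shows "AE q in \<nu> k \<Otimes>\<^sub>M \<nu> l. W (fst q) (snd q) \<noteq> \<infinity>"
proof -
  have m: "(\<lambda>q. ennreal (dd k l q)) \<in> borel_measurable (\<mu> \<Otimes>\<^sub>M \<mu>)" using dd_meas[OF k l] by measurable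
  show ?thesis unfolding nu_pair[OF k l] AE_density[OF m] using AE_W by (auto elim: eventually_mono)
qed

lemma int_V: "k \<in> S \<Longrightarrow> integrable (\<nu> k) V"
proof -
  assume k: "k \<in> S"
  interpret prob_space "\<nu> k" using prob_nu[OF k] .
  show ?thesis
  proof (rule finite_measure.integrable_const_bound[where B=Vb])
    show "finite_measure (\<nu> k)" by unfold_locales
    show "AE x in \<nu> k. norm (V x) \<le> Vb"
      using AE_nu[OF k] by eventually_elim (use C_sub[OF S_lt[OF k]] Vb in auto)
  qed simp
qed

definition av :: "nat \<Rightarrow> real" where "av k = integral\<^sup>L (\<nu> k) V"

lemma av_bound: "k \<in> S \<Longrightarrow> \<bar>av k\<bar> \<le> Vb"
proof -
  assume k: "k \<in> S"
  interpret prob_space "\<nu> k" using prob_nu[OF k] .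
  have "norm (integral\<^sup>L (\<nu> k) V) \<le> integral\<^sup>L (\<nu> k) (\<lambda>x. norm (V x))"
    by (rule integral_norm_bound)
  also have "\<dots> \<le> integral\<^sup>L (\<nu> k) (\<lambda>x. Vb)"
    using AE_nu[OF k] int_V[OF k]
    using C_sub[OF S_lt[OF k]] by (intro integral_mono_AE) (auto elim!: eventually_mono intro!: Vb)
  also have "\<dots> = Vb" using prob_space by simp
  finally have "norm (integral\<^sup>L (\<nu> k) V) \<le> Vb" .
  then show ?thesis by (simp add: av_def)
qed

end



context setting3
begin

lemma Gr_swap: "Gr (y, x) = Gr (x, y)"
  by (simp add: Gr_def W_sym)

lemma g_sym: assumes k: "k \<in> S" and l: "l \<in> S" shows "g k l = g l k"
proof -
  interpret nk: prob_space "\<nu> k" using prob_nu[OF k] .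
  interpret nl: prob_space "\<nu> l" using prob_nu[OF l] .
  interpret ps: pair_sigma_finite "\<nu> l" "\<nu> k" ..
  have m: "Gr \<in> borel_measurable (\<nu> l \<Otimes>\<^sub>M \<nu> k)"
    by (rule Gr_meas) (simp_all add: sets_nu)
  have "g l k = (\<integral>(x,y). Gr (y,x) \<partial>(\<nu> k \<Otimes>\<^sub>M \<nu> l))"
    unfolding g_def by (rule ps.integral_product_swap[OF m, symmetric])
  also have "(\<lambda>(x,y). Gr (y,x)) = Gr" by (rule ext) (auto simp: Gr_swap)
  finally show ?thesis by (simp add: g_def)
qed

definition U where "U = (\<Union>k\<in>S. C k)"

lemma U_meas[measurable]: "U \<in> sets borel"
  unfolding U_def using finite_S by (intro sets.finite_UN) auto

lemma AE_mu_U': "AE x in \<mu>. x \<in> U"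
  using AE_mu_U by eventually_elim (auto simp: U_def)

lemma AE_mu2_U: "AE q in \<mu> \<Otimes>\<^sub>M \<mu>. fst q \<in> U \<and> snd q \<in> U"
proof -
  interpret pp: pair_prob_space \<mu> \<mu> ..
  show ?thesis
  proof (rule pp.AE_pair_measure)
    show "{x \<in> space (\<mu> \<Otimes>\<^sub>M \<mu>). fst x \<in> U \<and> snd x \<in> U} \<in> sets (\<mu> \<Otimes>\<^sub>M \<mu>)"
      by measurable
    show "AE x in \<mu>. AE y in \<mu>. fst (x, y) \<in> U \<and> snd (x, y) \<in> U"
      using AE_mu_U'
    proof eventually_elim
      case (elim x)
      show ?case using AE_mu_U' by eventually_elim (use elim in auto)
    qed
  qed
qed

lemma disj_S: "disjoint_family_on C S"
  using C_disj S_sub by (rule disjoint_family_on_mono[rotated])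

lemma sum_ind_U: "(\<Sum>k\<in>S. indicator (C k) x :: real) = indicator U x"
  unfolding U_def by (rule indicator_UN_disjoint[OF finite_S disj_S, symmetric])

lemma decomp: "(\<Sum>k\<in>S. \<Sum>l\<in>S. p k * p l * g k l) = integral\<^sup>L (\<mu> \<Otimes>\<^sub>M \<mu>) Gr"
proof -
  define f where "f k l q = indicator (C k) (fst q) * indicator (C l) (snd q) * Gr q" for k l q
  have fe: "f k l q = (p k * p l) * (dd k l q *\<^sub>R Gr q)" if "k \<in> S" "l \<in> S" for k l q
    using p_pos[OF that(1)] p_pos[OF that(2)] by (simp add: f_def dd_def)
  have fi: "integrable (\<mu> \<Otimes>\<^sub>M \<mu>) (f k l)" if "k \<in> S" "l \<in> S" for k l
  proof -
    have "f k l = (\<lambda>q. (p k * p l) * (dd k l q *\<^sub>R Gr q))" using fe[OF that] by auto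
    then show ?thesis using integrable_mult_right[OF int_dd_Gr[OF that], of "p k * p l"] by simp
  qed
  have e1: "p k * p l * g k l = integral\<^sup>L (\<mu> \<Otimes>\<^sub>M \<mu>) (f k l)" if "k \<in> S" "l \<in> S" for k l
  proof -
    have "f k l = (\<lambda>q. (p k * p l) * (dd k l q *\<^sub>R Gr q))" using fe[OF that] by auto
    then show ?thesis by (simp add: g_eq[OF that])
  qed
  have "(\<Sum>k\<in>S. \<Sum>l\<in>S. p k * p l * g k l) = (\<Sum>k\<in>S. \<Sum>l\<in>S. integral\<^sup>L (\<mu> \<Otimes>\<^sub>M \<mu>) (f k l))"
    using e1 by simp
  also have "\<dots> = (\<Sum>k\<in>S. integral\<^sup>L (\<mu> \<Otimes>\<^sub>M \<mu>) (\<lambda>q. \<Sum>l\<in>S. f k l q))"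
    using fi by (intro sum.cong refl Bochner_Integration.integral_sum[symmetric]) auto
  also have "\<dots> = integral\<^sup>L (\<mu> \<Otimes>\<^sub>M \<mu>) (\<lambda>q. \<Sum>k\<in>S. \<Sum>l\<in>S. f k l q)"
    using fi by (intro Bochner_Integration.integral_sum[symmetric] Bochner_Integration.integrable_sum) auto
  also have "\<dots> = integral\<^sup>L (\<mu> \<Otimes>\<^sub>M \<mu>) Gr"
  proof (rule integral_cong_AE)
    show "(\<lambda>q. \<Sum>k\<in>S. \<Sum>l\<in>S. f k l q) \<in> borel_measurable (\<mu> \<Otimes>\<^sub>M \<mu>)"
      using fi by (intro borel_measurable_sum) auto
    show "AE q in \<mu> \<Otimes>\<^sub>M \<mu>. (\<Sum>k\<in>S. \<Sum>l\<in>S. f k l q) = Gr q"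
      using AE_mu2_U
    proof eventually_elim
      case (elim q)
      have "(\<Sum>k\<in>S. \<Sum>l\<in>S. f k l q) = (\<Sum>k\<in>S. \<Sum>l\<in>S. indicator (C k) (fst q) * indicator (C l) (snd q)) * Gr q"
        by (simp add: f_def sum_distrib_right)
      also have "\<dots> = (\<Sum>k\<in>S. indicator (C k) (fst q)) * (\<Sum>l\<in>S. indicator (C l) (snd q)) * Gr q"
        by (simp only: sum_product)
      also have "\<dots> = Gr q" using elim by (simp add: sum_ind_U)
      finally show ?case .
    qed
  qed simp
  finally show ?thesis .
qed

end



lemma boltz_meas[measurable (raw)]:
  assumes [measurable]: "f \<in> borel_measurable M"
  shows "(\<lambda>x. boltz b (f x)) \<in> borel_measurable M"
  unfolding boltz_def by measurable

lemma pair_sum_identity: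
  fixes A :: "nat \<Rightarrow> real"
  shows "(\<Sum>i<N. \<Sum>j\<in>{i<..<N}. A i + A j) = (real N - 1) * (\<Sum>i<N. A i)"
proof (induction N)
  case 0 then show ?case by simp
next
  case (Suc N)
  have e: "{N<..<Suc N} = {}" by auto
  have "(\<Sum>i<Suc N. \<Sum>j\<in>{i<..<Suc N}. A i + A j) = (\<Sum>i<N. \<Sum>j\<in>{i<..<Suc N}. A i + A j)"
    by (simp add: e)
  also have "\<dots> = (\<Sum>i<N. (\<Sum>j\<in>{i<..<N}. A i + A j) + (A i + A N))"
  proof (intro sum.cong refl)
    fix i assume "i \<in> {..<N}"
    then have "{i<..<Suc N} = insert N {i<..<N}" by auto
    then show "(\<Sum>j\<in>{i<..<Suc N}. A i + A j) = (\<Sum>j\<in>{i<..<N}. A i + A j) + (A i + A N)"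
      by simp
  qed
  also have "\<dots> = (real N - 1) * (\<Sum>i<N. A i) + (\<Sum>i<N. A i) + real N * A N"
    using Suc.IH by (simp add: sum.distrib)
  also have "\<dots> = (real (Suc N) - 1) * (\<Sum>i<Suc N. A i)"
    by (simp add: algebra_simps)
  finally show ?case .
qed

context setting
begin

lemma HN_meas:
  assumes sets: "\<And>i. i < N \<Longrightarrow> sets (Mi i) = sets borel"
  shows "HN V W N \<in> borel_measurable (PiM {..<N} Mi)"
proof -
  have comp[measurable]: "(\<lambda>x. x i) \<in> borel_measurable (PiM {..<N} Mi)" if "i < N" for i
    using measurable_component_singleton[of i "{..<N}" Mi] that sets
    by (simp cong: measurable_cong_sets)
  show ?thesis unfolding HN_def[abs_def]
    by measurable
qed

end



context setting3
begin

definition pmin :: real where "pmin = Min (p ` S)"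

lemma pmin_pos: "pmin > 0"
  unfolding pmin_def using finite_S S_ne p_pos by (subst Min_gr_iff) auto

lemma pmin_le: "k \<in> S \<Longrightarrow> pmin \<le> p k"
  unfolding pmin_def using finite_S by (intro Min_le) auto

definition Bd :: real where "Bd = 1 / (\<delta> * pmin)"

lemma Bd_pos: "Bd > 0" using pmin_pos delta_pos by (simp add: Bd_def)

lemma dens_le: assumes k: "k \<in> S" shows "h y * indicator (C k) y / p k \<le> Bd"
proof (cases "y \<in> C k")
  case True
  have "h y * indicator (C k) y / p k = h y / p k" using True by simp
  also have "\<dots> \<le> (1 / \<delta>) / pmin"
    using h_le[of y] h_nonneg[of y] pmin_le[OF k] pmin_pos p_pos[OF k] delta_pos
    by (intro frac_le) auto
  also have "\<dots> = Bd" by (simp add: Bd_def)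
  finally show ?thesis .
next
  case False then show ?thesis using Bd_pos by simp
qed

lemma density_bound:
  fixes N :: nat and c :: "nat \<Rightarrow> nat" and G :: "(nat \<Rightarrow> 'a) \<Rightarrow> ennreal"
  assumes cS: "\<And>i. c i \<in> S"
    and Gm: "G \<in> borel_measurable (PiM {..<N} (\<lambda>i. lborel))"
  shows "(\<integral>\<^sup>+ x. G x \<partial>PiM {..<N} (\<lambda>i. \<nu> (c i)))
     \<le> ennreal (Bd ^ N) * (\<integral>\<^sup>+ x. indicator {x. \<forall>i<N. x i \<in> C (c i)} x * G x \<partial>PiM {..<N} (\<lambda>i. lborel))"
proof -
  define f where "f i y = ennreal (h y * indicator (C (c i)) y / p (c i))" for i y
  have Cm[measurable]: "C (c i) \<in> sets borel" for i using cS by simp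
  have fm[measurable]: "f i \<in> borel_measurable lborel" for i unfolding f_def by measurable
  have nuf: "\<nu> (c i) = density lborel (f i)" for i using nu_lborel[OF cS[of i]] by (simp add: f_def[abs_def])
  have sf: "sigma_finite_measure (density lborel (f i))" for i
    using prob_nu[OF cS[of i]] nuf[of i] by (metis prob_space_imp_sigma_finite)
  have eqP: "PiM {..<N} (\<lambda>i. \<nu> (c i)) = density (PiM {..<N} (\<lambda>i. lborel)) (\<lambda>x. \<Prod>i<N. f i (x i))"
    unfolding nuf by (rule PiM_density_eq[OF fm sf]) simp
  have pm: "(\<lambda>x. \<Prod>i<N. f i (x i)) \<in> borel_measurable (PiM {..<N} (\<lambda>i. (lborel::'a measure)))"
    by measurable
  have Em: "(\<lambda>x. indicator {x. \<forall>i<N. x i \<in> C (c i)} x * G x) \<in> borel_measurable (PiM {..<N} (\<lambda>i. (lborel::'a measure)))"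
    using Gm by measurable
  have pt: "(\<Prod>i<N. f i (x i)) \<le> ennreal (Bd ^ N) * indicator {x. \<forall>i<N. x i \<in> C (c i)} x" for x
  proof (cases "\<forall>i<N. x i \<in> C (c i)")
    case True
    have "(\<Prod>i<N. f i (x i)) = ennreal (\<Prod>i<N. h (x i) * indicator (C (c i)) (x i) / p (c i))"
      unfolding f_def using h_nonneg p_nonneg by (intro prod_ennreal) auto
    also have "\<dots> \<le> ennreal (\<Prod>i<N. Bd)"
      using h_nonneg p_nonneg dens_le[OF cS] by (intro ennreal_leI prod_mono) auto
    finally show ?thesis using True by simp
  next
    case False
    then obtain i where i: "i < N" "x i \<notin> C (c i)" by auto
    have z: "f i (x i) = 0" using i by (simp add: f_def)
    have "(\<Prod>i<N. f i (x i)) = 0" using prod_zero[of "{..<N}" "\<lambda>i. f i (x i)"] i(1) z by auto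
    note zz = this
    show ?thesis unfolding zz by (rule zero_le)
  qed
  have "(\<integral>\<^sup>+ x. G x \<partial>PiM {..<N} (\<lambda>i. \<nu> (c i))) = (\<integral>\<^sup>+ x. (\<Prod>i<N. f i (x i)) * G x \<partial>PiM {..<N} (\<lambda>i. lborel))"
    unfolding eqP using pm Gm by (rule nn_integral_density)
  also have "\<dots> \<le> (\<integral>\<^sup>+ x. ennreal (Bd ^ N) * (indicator {x. \<forall>i<N. x i \<in> C (c i)} x * G x) \<partial>PiM {..<N} (\<lambda>i. lborel))"
    by (intro nn_integral_mono) (use pt in \<open>auto simp: mult.assoc[symmetric] intro: mult_right_mono\<close>)
  also have "\<dots> = ennreal (Bd ^ N) * (\<integral>\<^sup>+ x. indicator {x. \<forall>i<N. x i \<in> C (c i)} x * G x \<partial>PiM {..<N} (\<lambda>i. lborel))"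
    using Em by (rule nn_integral_cmult)
  finally show ?thesis .
qed

end



context setting3
begin

lemma sets_borel_nu_pair: "sets (\<nu> k \<Otimes>\<^sub>M \<nu> l) = sets (borel \<Otimes>\<^sub>M borel)"
  by (intro sets_pair_measure_cong) (simp_all add: sets_nu)

context
  fixes N :: nat and c :: "nat \<Rightarrow> nat"
  assumes cS: "\<And>i. c i \<in> S"
begin

abbreviation "PP \<equiv> PiM {..<N} (\<lambda>i. \<nu> (c i))"

lemma prob_PP: "prob_space PP"
  by (intro prob_space_PiM prob_nu cS)

lemma pair_meas_P: "i < N \<Longrightarrow> j < N \<Longrightarrow> (\<lambda>x. (x i, x j)) \<in> PP \<rightarrow>\<^sub>M \<nu> (c i) \<Otimes>\<^sub>M \<nu> (c j)"
  by (intro measurable_Pair) auto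

lemma distr_pair_P: "i < N \<Longrightarrow> j < N \<Longrightarrow> i \<noteq> j \<Longrightarrow>
    distr PP (\<nu> (c i) \<Otimes>\<^sub>M \<nu> (c j)) (\<lambda>x. (x i, x j)) = \<nu> (c i) \<Otimes>\<^sub>M \<nu> (c j)"
  by (rule distr_PiM_pair) (auto intro: prob_nu cS)

lemma pair_P:
  assumes ij: "i < N" "j < N" "i \<noteq> j"
  shows "integrable PP (\<lambda>x. Gr (x i, x j))" "integral\<^sup>L PP (\<lambda>x. Gr (x i, x j)) = g (c i) (c j)"
    "AE x in PP. W (x i) (x j) \<noteq> \<infinity>"
proof -
  have Gm: "Gr \<in> borel_measurable (\<nu> (c i) \<Otimes>\<^sub>M \<nu> (c j))"
    by (rule Gr_meas) (simp_all add: sets_nu)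
  show "integrable PP (\<lambda>x. Gr (x i, x j))"
    using integrable_distr_eq[OF pair_meas_P[OF ij(1,2)] Gm] distr_pair_P[OF ij] int_pair[OF cS cS] by simp
  show "integral\<^sup>L PP (\<lambda>x. Gr (x i, x j)) = g (c i) (c j)"
    using integral_distr[OF pair_meas_P[OF ij(1,2)] Gm] distr_pair_P[OF ij] by (simp add: g_def)
  have "AE q in distr PP (\<nu> (c i) \<Otimes>\<^sub>M \<nu> (c j)) (\<lambda>x. (x i, x j)). W (fst q) (snd q) \<noteq> \<infinity>"
    unfolding distr_pair_P[OF ij] by (rule AE_W_pair[OF cS cS])
  from AE_distrD[OF pair_meas_P[OF ij(1,2)] this]
  show "AE x in PP. W (x i) (x j) \<noteq> \<infinity>" by simp
qed

lemma comp_P: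
  assumes i: "i < N"
  shows "integrable PP (\<lambda>x. V (x i))" "integral\<^sup>L PP (\<lambda>x. V (x i)) = av (c i)"
proof -
  have m: "(\<lambda>x. x i) \<in> PP \<rightarrow>\<^sub>M \<nu> (c i)" using i by simp
  have Vm: "V \<in> borel_measurable (\<nu> (c i))" by (simp add: measurable_cong_sets[OF sets_nu refl])
  have d: "distr PP (\<nu> (c i)) (\<lambda>x. x i) = \<nu> (c i)"
    using i by (intro distr_PiM_component) (auto intro: prob_nu cS)
  show "integrable PP (\<lambda>x. V (x i))"
    using integrable_distr_eq[OF m Vm] d int_V[OF cS] by simp
  show "integral\<^sup>L PP (\<lambda>x. V (x i)) = av (c i)"
    using integral_distr[OF m Vm] d by (simp add: av_def)
qed

definition Y :: "(nat \<Rightarrow> 'a) \<Rightarrow> real" where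
  "Y x = ((\<Sum>i<N. \<Sum>j\<in>{i<..<N}. Gr (x i, x j)) + (\<Sum>i<N. V (x i))) / (real N)\<^sup>2"

lemma Y_int: "integrable PP Y"
  "integral\<^sup>L PP Y = ((\<Sum>i<N. \<Sum>j\<in>{i<..<N}. g (c i) (c j)) + (\<Sum>i<N. av (c i))) / (real N)\<^sup>2"
proof -
  have i1: "integrable PP (\<lambda>x. \<Sum>i<N. \<Sum>j\<in>{i<..<N}. Gr (x i, x j))"
    using pair_P(1) by (intro Bochner_Integration.integrable_sum) auto
  have i2: "integrable PP (\<lambda>x. \<Sum>i<N. V (x i))"
    using comp_P(1) by (intro Bochner_Integration.integrable_sum) auto
  show "integrable PP Y" unfolding Y_def[abs_def] using i1 i2 by (intro integrable_divide_zero Bochner_Integration.integrable_add)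
  have "integral\<^sup>L PP (\<lambda>x. \<Sum>i<N. \<Sum>j\<in>{i<..<N}. Gr (x i, x j)) = (\<Sum>i<N. \<Sum>j\<in>{i<..<N}. g (c i) (c j))"
  proof -
    have "integral\<^sup>L PP (\<lambda>x. \<Sum>i<N. \<Sum>j\<in>{i<..<N}. Gr (x i, x j)) = (\<Sum>i<N. integral\<^sup>L PP (\<lambda>x. \<Sum>j\<in>{i<..<N}. Gr (x i, x j)))"
      using pair_P(1) by (intro Bochner_Integration.integral_sum Bochner_Integration.integrable_sum) auto
    also have "\<dots> = (\<Sum>i<N. \<Sum>j\<in>{i<..<N}. integral\<^sup>L PP (\<lambda>x. Gr (x i, x j)))"
      using pair_P(1) by (intro sum.cong refl Bochner_Integration.integral_sum) auto
    also have "\<dots> = (\<Sum>i<N. \<Sum>j\<in>{i<..<N}. g (c i) (c j))"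
      using pair_P(2) by (intro sum.cong refl) auto
    finally show ?thesis .
  qed
  moreover have "integral\<^sup>L PP (\<lambda>x. \<Sum>i<N. V (x i)) = (\<Sum>i<N. av (c i))"
    using comp_P by (simp add: Bochner_Integration.integral_sum)
  ultimately show "integral\<^sup>L PP Y = ((\<Sum>i<N. \<Sum>j\<in>{i<..<N}. g (c i) (c j)) + (\<Sum>i<N. av (c i))) / (real N)\<^sup>2"
    unfolding Y_def[abs_def] using i1 i2 by simp
qed

lemma HN_Y: assumes N: "N > 0" shows "AE x in PP. HN V W N x = ereal (Y x)"
proof -
  have "AE x in PP. \<forall>i\<in>{..<N}. \<forall>j\<in>{i<..<N}. W (x i) (x j) \<noteq> \<infinity>"
    using pair_P(3) by (subst AE_finite_all, simp, intro ballI, subst AE_finite_all, simp, auto)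
  then show ?thesis
  proof eventually_elim
    case (elim x)
    define Wr where "Wr i j = real_of_ereal (W (x i) (x j))" for i j
    have WW: "W (x i) (x j) = ereal (Wr i j)" if "i < N" "j \<in> {i<..<N}" for i j
      using elim that W_nmi[of "x i" "x j"] unfolding Wr_def by (cases "W (x i) (x j)") auto
    have sW: "(\<Sum>i<N. \<Sum>j\<in>{i<..<N}. W (x i) (x j)) = ereal (\<Sum>i<N. \<Sum>j\<in>{i<..<N}. Wr i j)"
    proof -
      have "(\<Sum>i<N. \<Sum>j\<in>{i<..<N}. W (x i) (x j)) = (\<Sum>i<N. \<Sum>j\<in>{i<..<N}. ereal (Wr i j))"
        by (intro sum.cong refl WW) auto
      also have "\<dots> = (\<Sum>i<N. ereal (\<Sum>j\<in>{i<..<N}. Wr i j))" by (simp only: sum_ereal)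
      also have "\<dots> = ereal (\<Sum>i<N. \<Sum>j\<in>{i<..<N}. Wr i j)" by (simp only: sum_ereal)
      finally show ?thesis .
    qed
    have Nr: "real N > 0" using N by simp
    have "HN V W N x = ereal ((\<Sum>i<N. V (x i)) / real N + (\<Sum>i<N. \<Sum>j\<in>{i<..<N}. Wr i j) / (real N)\<^sup>2)"
      unfolding HN_def sW using Nr by simp
    also have "(\<Sum>i<N. V (x i)) / real N + (\<Sum>i<N. \<Sum>j\<in>{i<..<N}. Wr i j) / (real N)\<^sup>2 = Y x"
    proof -
      have "(\<Sum>i<N. \<Sum>j\<in>{i<..<N}. Gr (x i, x j)) = (\<Sum>i<N. \<Sum>j\<in>{i<..<N}. V (x i) + V (x j)) + (\<Sum>i<N. \<Sum>j\<in>{i<..<N}. Wr i j)"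
        by (simp add: Gr_def Wr_def sum.distrib)
      also have "\<dots> = (real N - 1) * (\<Sum>i<N. V (x i)) + (\<Sum>i<N. \<Sum>j\<in>{i<..<N}. Wr i j)"
        using pair_sum_identity[of "\<lambda>i. V (x i)" N] by simp
      finally show ?thesis unfolding Y_def using Nr by (simp add: field_simps power2_eq_square)
    qed
    finally show ?case .
  qed
qed

end

end



context setting3
begin

lemma ZQ_lower:
  fixes \<beta> :: "nat \<Rightarrow> real" and B :: "'a measure set" and N :: nat and c :: "nat \<Rightarrow> nat"
  assumes cS: "\<And>i. c i \<in> S" and N: "N > 0"
    and hypE: "\<And>x. (\<forall>i<N. x i \<in> C (c i)) \<Longrightarrow> empirical N x \<in> B"
  shows "ennreal (exp (- \<beta> N * integral\<^sup>L (PiM {..<N} (\<lambda>i. \<nu> (c i))) (Y N)))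
           \<le> ennreal (Bd ^ N) * ZQ \<beta> V W N B"
proof -
  define G where "G x = boltz (\<beta> N) (HN V W N x)" for x
  have Gm: "G \<in> borel_measurable (PiM {..<N} (\<lambda>i. (lborel::'a measure)))"
    unfolding G_def using HN_meas[of N "\<lambda>i. lborel"] by measurable
  have "ennreal (exp (- \<beta> N * integral\<^sup>L (PiM {..<N} (\<lambda>i. \<nu> (c i))) (Y N)))
      \<le> (\<integral>\<^sup>+ x. ennreal (exp (- \<beta> N * Y N x)) \<partial>PiM {..<N} (\<lambda>i. \<nu> (c i)))"
    by (rule jensen_exp[OF prob_PP[where c=c and N=N, OF cS] Y_int(1)[where c=c and N=N, OF cS]])
  also have "\<dots> = (\<integral>\<^sup>+ x. G x \<partial>PiM {..<N} (\<lambda>i. \<nu> (c i)))"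
    using HN_Y[where c=c and N=N, OF cS N] by (intro nn_integral_cong_AE) (auto elim!: eventually_mono simp: G_def boltz_def)
  also have "\<dots> \<le> ennreal (Bd ^ N) * (\<integral>\<^sup>+ x. indicator {x. \<forall>i<N. x i \<in> C (c i)} x * G x \<partial>PiM {..<N} (\<lambda>i. lborel))"
    by (rule density_bound[OF cS Gm])
  also have "\<dots> \<le> ennreal (Bd ^ N) * ZQ \<beta> V W N B"
    unfolding ZQ_def
  proof (intro mult_left_mono nn_integral_mono)
    fix x
    show "indicator {x. \<forall>i<N. x i \<in> C (c i)} x * G x \<le> indicator {x. empirical N x \<in> B} x * boltz (\<beta> N) (HN V W N x)"
      using hypE[of x] by (auto simp: G_def indicator_def)
  qed simp
  finally show ?thesis .
qed

end



lemma integral_empirical: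
  fixes f :: "'a::euclidean_space \<Rightarrow> real"
  assumes N: "N > 0" and f: "f \<in> borel_measurable borel"
  shows "integral\<^sup>L (empirical N x) f = (\<Sum>i<N. f (x i)) / real N"
proof -
  have m: "x \<in> uniform_count_measure {..<N} \<rightarrow>\<^sub>M borel"
  proof -
    have "sets (uniform_count_measure {..<N}) = sets (count_space {..<N})" by (simp add: sets_uniform_count_measure)
    then show ?thesis by (simp cong: measurable_cong_sets add: measurable_count_space_eq1)
  qed
  show ?thesis unfolding empirical_def
    by (simp add: integral_distr[OF m f] integral_uniform_count_measure)
qed

context setting3
begin

definition yk :: "nat \<Rightarrow> 'a" where "yk k = (SOME y. y \<in> C k)"

lemma yk: assumes k: "k \<in> S" shows "yk k \<in> C k"
proof -
  have "C k \<noteq> {}" using p_pos[OF k] by (auto simp: p_def)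
  then show ?thesis unfolding yk_def by (auto intro: someI)
qed

lemma lip_meas: "1-lipschitz_on UNIV f \<Longrightarrow> f \<in> borel_measurable borel"
  by (intro borel_measurable_continuous_onI lipschitz_on_continuous_on) auto

lemma lip_C: assumes f: "1-lipschitz_on UNIV f" and k: "k \<in> S" and z: "z \<in> C k"
  shows "f z \<le> f (yk k) + e" "f z \<ge> f (yk k) - e"
proof -
  have "dist (f z) (f (yk k)) \<le> 1 * dist z (yk k)" by (rule lipschitz_onD[OF f]) auto
  also have "\<dots> \<le> e" using C_diam[OF S_lt[OF k] z yk[OF k]] by simp
  finally have "\<bar>f z - f (yk k)\<bar> \<le> e" by (simp add: dist_real_def)
  then show "f z \<le> f (yk k) + e" "f z \<ge> f (yk k) - e" by auto
qed

lemma int_mu_upper: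
  assumes f: "1-lipschitz_on UNIV f" and fb: "\<And>x. \<bar>f x\<bar> \<le> 1"
  shows "integral\<^sup>L \<mu> f \<le> (\<Sum>k\<in>S. p k * f (yk k)) + e"
proof -
  have fm[measurable]: "f \<in> borel_measurable borel" by (rule lip_meas[OF f])
  have Cm[measurable]: "k \<in> S \<Longrightarrow> C k \<in> sets borel" for k by simp
  have fi: "integrable \<mu> (\<lambda>z. indicator (C k) z * f z)" if k: "k \<in> S" for k
  proof (rule finite_measure.integrable_const_bound[where B=1])
    show "finite_measure \<mu>" by unfold_locales
    show "AE x in \<mu>. norm (indicator (C k) x * f x) \<le> 1"
      using fb by (auto simp: indicator_def abs_mult)
    show "(\<lambda>z. indicator (C k) z * f z) \<in> borel_measurable \<mu>" using k by measurable
  qed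
  have "integral\<^sup>L \<mu> f = integral\<^sup>L \<mu> (\<lambda>z. \<Sum>k\<in>S. indicator (C k) z * f z)"
  proof (rule integral_cong_AE)
    show "(\<lambda>z. \<Sum>k\<in>S. indicator (C k) z * f z) \<in> borel_measurable \<mu>"
      using fi by (intro borel_measurable_sum) auto
    show "AE x in \<mu>. f x = (\<Sum>k\<in>S. indicator (C k) x * f x)"
      using AE_mu_U' by eventually_elim (simp add: sum_distrib_right[symmetric] sum_ind_U)
  qed simp
  also have "\<dots> = (\<Sum>k\<in>S. integral\<^sup>L \<mu> (\<lambda>z. indicator (C k) z * f z))"
    using fi by (intro Bochner_Integration.integral_sum) auto
  also have "\<dots> \<le> (\<Sum>k\<in>S. integral\<^sup>L \<mu> (\<lambda>z. indicator (C k) z * (f (yk k) + e)))"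
  proof (intro sum_mono integral_mono)
    fix k assume k: "k \<in> S"
    show "integrable \<mu> (\<lambda>z. indicator (C k) z * f z)" by (rule fi[OF k])
    show "integrable \<mu> (\<lambda>z. indicator (C k) z * (f (yk k) + e))"
      using k by (intro integrable_mult_left) (auto simp: mu.emeasure_eq_measure)
    fix z show "indicator (C k) z * f z \<le> indicator (C k) z * (f (yk k) + e)"
      using lip_C(1)[OF f k, of z] by (auto simp: indicator_def)
  qed
  also have "\<dots> = (\<Sum>k\<in>S. p k * (f (yk k) + e))"
  proof (intro sum.cong refl)
    fix k assume k: "k \<in> S"
    have "integral\<^sup>L \<mu> (\<lambda>z. indicator (C k) z * (f (yk k) + e)) = integral\<^sup>L \<mu> (indicator (C k)) * (f (yk k) + e)"
      by (rule integral_mult_left_zero)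
    then show "integral\<^sup>L \<mu> (\<lambda>z. indicator (C k) z * (f (yk k) + e)) = p k * (f (yk k) + e)"
      by (simp add: p_def)
  qed
  also have "\<dots> = (\<Sum>k\<in>S. p k * f (yk k)) + e"
    using sum_p by (simp add: distrib_left sum.distrib sum_distrib_right[symmetric])
  finally show ?thesis .
qed

definition q :: "nat \<Rightarrow> (nat \<Rightarrow> nat) \<Rightarrow> nat \<Rightarrow> real" where
  "q N c k = real (card {i. i < N \<and> c i = k}) / real N"

lemma emp_lower:
  assumes f: "1-lipschitz_on UNIV f" and cS: "\<And>i. c i \<in> S" and N: "N > 0"
    and x: "\<forall>i<N. x i \<in> C (c i)"
  shows "(\<Sum>i<N. f (x i)) / real N \<ge> (\<Sum>k\<in>S. q N c k * f (yk k)) - e"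
proof -
  have "(\<Sum>i<N. f (yk (c i)) - e) \<le> (\<Sum>i<N. f (x i))"
    using lip_C(2)[OF f cS] x by (intro sum_mono) auto
  moreover have "(\<Sum>i<N. f (yk (c i))) = (\<Sum>k\<in>S. real (card {i. i < N \<and> c i = k}) * f (yk k))"
  proof -
    have "(\<Sum>i<N. f (yk (c i))) = (\<Sum>k\<in>S. \<Sum>i\<in>{i\<in>{..<N}. c i = k}. f (yk (c i)))"
      using cS finite_S by (intro sum.group[symmetric]) auto
    also have "\<dots> = (\<Sum>k\<in>S. real (card {i. i < N \<and> c i = k}) * f (yk k))"
    proof (intro sum.cong refl)
      fix k assume "k \<in> S"
      have "(\<Sum>i\<in>{i\<in>{..<N}. c i = k}. f (yk (c i))) = (\<Sum>i\<in>{i\<in>{..<N}. c i = k}. f (yk k))"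
        by (intro sum.cong) auto
      also have "\<dots> = real (card {i. i < N \<and> c i = k}) * f (yk k)" by simp
      finally show "(\<Sum>i\<in>{i\<in>{..<N}. c i = k}. f (yk (c i))) = real (card {i. i < N \<and> c i = k}) * f (yk k)" .
    qed
    finally show ?thesis .
  qed
  ultimately have "(\<Sum>k\<in>S. real (card {i. i < N \<and> c i = k}) * f (yk k)) - real N * e \<le> (\<Sum>i<N. f (x i))"
    by (simp add: sum_subtractf)
  then have "((\<Sum>k\<in>S. real (card {i. i < N \<and> c i = k}) * f (yk k)) - real N * e) / real N \<le> (\<Sum>i<N. f (x i)) / real N"
    using N by (intro divide_right_mono) auto
  moreover have "((\<Sum>k\<in>S. real (card {i. i < N \<and> c i = k}) * f (yk k)) - real N * e) / real N
      = (\<Sum>k\<in>S. q N c k * f (yk k)) - e"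
    using N by (simp add: q_def diff_divide_distrib sum_divide_distrib)
  ultimately show ?thesis by simp
qed

lemma dFM_bound:
  assumes cS: "\<And>i. c i \<in> S" and N: "N > 0" and x: "\<forall>i<N. x i \<in> C (c i)"
  shows "dFM \<mu> (empirical N x) \<le> 2 * e + (\<Sum>k\<in>S. \<bar>p k - q N c k\<bar>)"
  unfolding dFM_def
proof (rule cSUP_least)
  show "{f::'a\<Rightarrow>real. (\<forall>x. \<bar>f x\<bar> \<le> 1) \<and> 1-lipschitz_on UNIV f} \<noteq> {}"
  proof -
    have "(\<lambda>_::'a. 0::real) \<in> {f. (\<forall>x. \<bar>f x\<bar> \<le> 1) \<and> 1-lipschitz_on UNIV f}" by (simp add: lipschitz_on_def)
    then show ?thesis by (metis empty_iff)
  qed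
  fix f :: "'a \<Rightarrow> real" assume "f \<in> {f. (\<forall>x. \<bar>f x\<bar> \<le> 1) \<and> 1-lipschitz_on UNIV f}"
  then have fb: "\<And>x. \<bar>f x\<bar> \<le> 1" and f: "1-lipschitz_on UNIV f" by auto
  have "integral\<^sup>L \<mu> f - integral\<^sup>L (empirical N x) f
      \<le> ((\<Sum>k\<in>S. p k * f (yk k)) + e) - ((\<Sum>k\<in>S. q N c k * f (yk k)) - e)"
    using int_mu_upper[OF f fb] emp_lower[OF f cS N x] integral_empirical[OF N lip_meas[OF f]] by simp
  also have "\<dots> = (\<Sum>k\<in>S. (p k - q N c k) * f (yk k)) + 2 * e"
    by (simp add: sum_subtractf left_diff_distrib)
  also have "(\<Sum>k\<in>S. (p k - q N c k) * f (yk k)) \<le> (\<Sum>k\<in>S. \<bar>p k - q N c k\<bar>)"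
  proof (intro sum_mono)
    fix k
    have "(p k - q N c k) * f (yk k) \<le> \<bar>(p k - q N c k) * f (yk k)\<bar>" by simp
    also have "\<dots> \<le> \<bar>p k - q N c k\<bar> * 1" unfolding abs_mult by (intro mult_left_mono fb) auto
    finally show "(p k - q N c k) * f (yk k) \<le> \<bar>p k - q N c k\<bar>" by simp
  qed
  finally show "integral\<^sup>L \<mu> f - integral\<^sup>L (empirical N x) f \<le> 2 * e + (\<Sum>k\<in>S. \<bar>p k - q N c k\<bar>)"
    by simp
qed

end



lemma sym_sum:
  fixes G :: "nat \<Rightarrow> nat \<Rightarrow> real"
  assumes sym: "\<And>i j. G i j = G j i"
  shows "2 * (\<Sum>i<N. \<Sum>j\<in>{i<..<N}. G i j) = (\<Sum>i<N. \<Sum>j<N. G i j) - (\<Sum>i<N. G i i)"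
proof (induction N)
  case 0 then show ?case by simp
next
  case (Suc N)
  have e: "{N<..<Suc N} = {}" by auto
  have ins: "{i<..<Suc N} = insert N {i<..<N}" if "i < N" for i using that by auto
  have "(\<Sum>i<Suc N. \<Sum>j\<in>{i<..<Suc N}. G i j) = (\<Sum>i<N. \<Sum>j\<in>{i<..<Suc N}. G i j)"
    by (simp add: e)
  also have "\<dots> = (\<Sum>i<N. (\<Sum>j\<in>{i<..<N}. G i j) + G i N)"
    by (intro sum.cong refl) (simp add: ins)
  finally have L: "(\<Sum>i<Suc N. \<Sum>j\<in>{i<..<Suc N}. G i j) = (\<Sum>i<N. \<Sum>j\<in>{i<..<N}. G i j) + (\<Sum>i<N. G i N)"
    by (simp add: sum.distrib)
  have R: "(\<Sum>i<Suc N. \<Sum>j<Suc N. G i j) = (\<Sum>i<N. \<Sum>j<N. G i j) + 2 * (\<Sum>i<N. G i N) + G N N"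
    using sym by (simp add: sum.distrib)
  show ?case using L R Suc.IH by simp
qed

lemma sum_group_count:
  fixes c :: "nat \<Rightarrow> nat" and S :: "nat set" and F :: "nat \<Rightarrow> real"
  assumes S: "finite S" and cS: "\<And>i. c i \<in> S"
  shows "(\<Sum>i<N. F (c i)) = (\<Sum>k\<in>S. real (card {i. i < N \<and> c i = k}) * F k)"
proof -
  have "(\<Sum>i<N. F (c i)) = (\<Sum>k\<in>S. \<Sum>i\<in>{i\<in>{..<N}. c i = k}. F (c i))"
    using cS S by (intro sum.group[symmetric]) auto
  also have "\<dots> = (\<Sum>k\<in>S. real (card {i. i < N \<and> c i = k}) * F k)"
  proof (intro sum.cong refl)
    fix k assume "k \<in> S"
    have "(\<Sum>i\<in>{i\<in>{..<N}. c i = k}. F (c i)) = (\<Sum>i\<in>{i\<in>{..<N}. c i = k}. F k)"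
      by (intro sum.cong) auto
    then show "(\<Sum>i\<in>{i\<in>{..<N}. c i = k}. F (c i)) = real (card {i. i < N \<and> c i = k}) * F k" by simp
  qed
  finally show ?thesis .
qed

context setting3
begin

lemma m_formula:
  assumes cS: "\<And>i. c i \<in> S" and N: "N > 0"
  shows "\<bar>((\<Sum>i<N. \<Sum>j\<in>{i<..<N}. g (c i) (c j)) + (\<Sum>i<N. av (c i))) / (real N)\<^sup>2
           - (\<Sum>k\<in>S. \<Sum>l\<in>S. q N c k * q N c l * g k l) / 2\<bar>
         \<le> ((\<Sum>k\<in>S. \<bar>g k k\<bar>) / 2 + Vb) / real N"
proof -
  define n where "n k = real (card {i. i < N \<and> c i = k})" for k
  have Nr: "real N > 0" using N by simp
  have two: "2 * (\<Sum>i<N. \<Sum>j\<in>{i<..<N}. g (c i) (c j)) = (\<Sum>i<N. \<Sum>j<N. g (c i) (c j)) - (\<Sum>i<N. g (c i) (c i))"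
    by (rule sym_sum) (simp add: g_sym cS)
  have full: "(\<Sum>i<N. \<Sum>j<N. g (c i) (c j)) = (\<Sum>k\<in>S. \<Sum>l\<in>S. n k * n l * g k l)"
  proof -
    have "(\<Sum>i<N. \<Sum>j<N. g (c i) (c j)) = (\<Sum>i<N. \<Sum>l\<in>S. n l * g (c i) l)"
    proof (rule sum.cong[OF refl])
      fix i show "(\<Sum>j<N. g (c i) (c j)) = (\<Sum>l\<in>S. n l * g (c i) l)"
        using sum_group_count[OF finite_S cS, where N=N and F="\<lambda>l. g (c i) l"] by (simp add: n_def)
    qed
    also have "\<dots> = (\<Sum>l\<in>S. \<Sum>i<N. n l * g (c i) l)" by (rule sum.swap)
    also have "\<dots> = (\<Sum>l\<in>S. \<Sum>k\<in>S. n k * (n l * g k l))"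
    proof (rule sum.cong[OF refl])
      fix l show "(\<Sum>i<N. n l * g (c i) l) = (\<Sum>k\<in>S. n k * (n l * g k l))"
        using sum_group_count[OF finite_S cS, where N=N and F="\<lambda>k. n l * g k l"] by (simp add: n_def)
    qed
    also have "\<dots> = (\<Sum>k\<in>S. \<Sum>l\<in>S. n k * n l * g k l)"
      by (subst sum.swap) (simp add: mult.assoc)
    finally show ?thesis .
  qed
  have qq: "(\<Sum>k\<in>S. \<Sum>l\<in>S. q N c k * q N c l * g k l) = (\<Sum>k\<in>S. \<Sum>l\<in>S. n k * n l * g k l) / (real N)\<^sup>2"
    by (simp add: q_def n_def sum_divide_distrib power2_eq_square)
  have diag: "\<bar>\<Sum>i<N. g (c i) (c i)\<bar> \<le> real N * (\<Sum>k\<in>S. \<bar>g k k\<bar>)"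
  proof -
    have "\<bar>\<Sum>i<N. g (c i) (c i)\<bar> \<le> (\<Sum>i<N. \<bar>g (c i) (c i)\<bar>)" by (rule sum_abs)
    also have "\<dots> \<le> (\<Sum>i<N. (\<Sum>k\<in>S. \<bar>g k k\<bar>))"
      using cS finite_S by (intro sum_mono member_le_sum[where f="\<lambda>k. \<bar>g k k\<bar>"]) auto
    finally show ?thesis by simp
  qed
  have avb: "\<bar>\<Sum>i<N. av (c i)\<bar> \<le> real N * Vb"
  proof -
    have "\<bar>\<Sum>i<N. av (c i)\<bar> \<le> (\<Sum>i<N. \<bar>av (c i)\<bar>)" by (rule sum_abs)
    also have "\<dots> \<le> (\<Sum>i<N. Vb)" using av_bound cS by (intro sum_mono) auto
    finally show ?thesis by simp
  qed
  have "((\<Sum>i<N. \<Sum>j\<in>{i<..<N}. g (c i) (c j)) + (\<Sum>i<N. av (c i))) / (real N)\<^sup>2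
           - (\<Sum>k\<in>S. \<Sum>l\<in>S. q N c k * q N c l * g k l) / 2
        = ((\<Sum>i<N. av (c i)) - (\<Sum>i<N. g (c i) (c i)) / 2) / (real N)\<^sup>2"
    using two full qq Nr by (simp add: field_simps)
  also have "\<bar>\<dots>\<bar> \<le> (real N * Vb + real N * (\<Sum>k\<in>S. \<bar>g k k\<bar>) / 2) / (real N)\<^sup>2"
  proof -
    have num: "\<bar>(\<Sum>i<N. av (c i)) - (\<Sum>i<N. g (c i) (c i)) / 2\<bar> \<le> real N * Vb + real N * (\<Sum>k\<in>S. \<bar>g k k\<bar>) / 2"
      using diag avb unfolding abs_le_iff by linarith
    have "\<bar>((\<Sum>i<N. av (c i)) - (\<Sum>i<N. g (c i) (c i)) / 2) / (real N)\<^sup>2\<bar>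
        = \<bar>(\<Sum>i<N. av (c i)) - (\<Sum>i<N. g (c i) (c i)) / 2\<bar> / (real N)\<^sup>2"
      by (simp add: abs_divide)
    also have "\<dots> \<le> (real N * Vb + real N * (\<Sum>k\<in>S. \<bar>g k k\<bar>) / 2) / (real N)\<^sup>2"
      using num by (intro divide_right_mono) auto
    finally show ?thesis .
  qed
  also have "\<dots> = ((\<Sum>k\<in>S. \<bar>g k k\<bar>) / 2 + Vb) / real N"
    using Nr by (simp add: field_simps power2_eq_square)
  finally show ?thesis .
qed

end



lemma eln_lower:
  assumes a: "0 < a" and b: "0 < b" and le: "ennreal a \<le> ennreal b * Z"
  shows "ereal (ln a - ln b) \<le> eln Z"
proof (cases Z rule: ennreal_cases)
  case (real z)
  have "ennreal a \<le> ennreal (b * z)" using le real b by (simp add: ennreal_mult)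
  then have az: "a \<le> b * z" using a b real by (simp add: ennreal_le_iff)
  then have "0 < b * z" using a by linarith
  then have zpos: "z > 0" using zero_less_mult_pos b by blast
  have "ln a \<le> ln (b * z)" using az a by simp
  also have "\<dots> = ln b + ln z" using b zpos by (simp add: ln_mult)
  finally have "ln a - ln b \<le> ln z" by simp
  then show ?thesis using real zpos by (simp add: eln_def)
next
  case top
  then show ?thesis by (simp add: eln_def)
qed

lemma ereal_div_lower:
  assumes "ereal t \<le> X" and "\<beta> > 0"
  shows "ereal (t / \<beta>) \<le> X / ereal \<beta>"
proof (cases X)
  case (real x)
  then show ?thesis using assms by (simp add: divide_right_mono)
next
  case PInf
  then show ?thesis using assms by simp
next
  case MInf
  then show ?thesis using assms by simp
qed

lemma N_over_beta:
  fixes \<beta> :: "nat \<Rightarrow> real"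
  assumes beta_pos: "\<And>N. \<beta> N > 0"
    and beta_growth: "filterlim (\<lambda>N. \<beta> N / (real N * ln (real N))) at_top sequentially"
  shows "((\<lambda>N. real N / \<beta> N) \<longlongrightarrow> 0) sequentially"
proof -
  have "filterlim (\<lambda>N. \<beta> N / real N) at_top sequentially"
  proof (rule filterlim_at_top_mono[OF beta_growth])
    show "\<forall>\<^sub>F N in sequentially. \<beta> N / (real N * ln (real N)) \<le> \<beta> N / real N"
      using eventually_ge_at_top[of 3]
    proof eventually_elim
      case (elim N)
      have "ln (real N) \<ge> 1"
      proof -
        have "exp 1 \<le> real N" using exp_le elim by linarith
        then have "ln (exp 1) \<le> ln (real N)" by (subst ln_le_cancel_iff) (use elim in auto)
        then show ?thesis by simp
      qed
      then have "real N \<le> real N * ln (real N)" using elim by simp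
      then show ?case using beta_pos[of N] elim
        by (intro divide_left_mono) auto
    qed
  qed
  then have "((\<lambda>N. inverse (\<beta> N / real N)) \<longlongrightarrow> 0) sequentially"
    by (rule tendsto_inverse_0_at_top)
  then show ?thesis by simp
qed

theorem proposition2p5:
  fixes V :: "'a::euclidean_space \<Rightarrow> real"
    and W :: "'a \<Rightarrow> 'a \<Rightarrow> ereal"
    and \<beta> :: "nat \<Rightarrow> real"
    and \<mu> :: "'a measure"
    and h :: "'a \<Rightarrow> real"
    and a b :: 'a
    and \<delta> r :: real
  assumes H1_cont: "continuous_on UNIV (\<lambda>(x, y). W x y)"
    and H1_sym: "\<And>x y. W x y = W y x"
    and H1_notMInf: "\<And>x y. W x y \<noteq> - \<infinity>"
    and H1_finite: "\<And>x y. x \<noteq> y \<Longrightarrow> W x y \<noteq> \<infinity>"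
    and H1_int: "\<And>K C. compact K \<Longrightarrow> compact C \<Longrightarrow>
                   (\<integral>\<^sup>+ z \<in> C. e2ennreal (Wsup W K z) \<partial>lborel) < \<infinity>"
    and H2_cont: "continuous_on UNIV V"
    and H2_coercive: "filterlim V at_top at_infinity"
    and H2_int: "(\<integral>\<^sup>+ x. ennreal (exp (- V x)) \<partial>lborel) < \<infinity>"
    and H3: "\<exists>c \<epsilon>o. 0 < \<epsilon>o \<and> \<epsilon>o < 1 \<and>
               (\<forall>x y. W x y \<ge> ereal (c - \<epsilon>o * (V x + V y)))"
    and beta_pos: "\<And>N. \<beta> N > 0"
    and beta_growth: "filterlim (\<lambda>N. \<beta> N / (real N * ln (real N))) at_top sequentially"
    and h_meas: "h \<in> borel_measurable lborel"
    and mu_def: "\<mu> = density lborel (\<lambda>x. ennreal (h x))"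
    and mu_prob: "prob_space \<mu>"
    and h_supp: "\<And>x. x \<notin> cbox a b \<Longrightarrow> h x = 0"
    and delta_pos: "\<delta> > 0"
    and h_bounds: "\<And>x. x \<in> cbox a b \<Longrightarrow> \<delta> \<le> h x \<and> h x \<le> 1 / \<delta>"
    and r_pos: "r > 0"
  shows "liminf (\<lambda>N. eln (ZQ \<beta> V W N {\<nu>. dFM \<mu> \<nu> < r}) / ereal (\<beta> N)) \<ge> - Irate V W \<mu>"
proof -
  interpret S0: setting V W h \<mu> a b \<delta>
    by (rule setting.intro[OF H1_cont H1_sym H2_cont H3 h_meas mu_def mu_prob h_supp delta_pos h_bounds])
  show ?thesis
  proof (cases "(\<integral>\<^sup>+ p. e2ennreal (S0.F p) \<partial>(\<mu> \<Otimes>\<^sub>M \<mu>)) = \<infinity>")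
    case True
    then have "Irate V W \<mu> = \<infinity>" by (rule S0.Irate_inf)
    then show ?thesis by simp
  next
    case False
    have r4: "r / 4 > 0" using r_pos by simp
    obtain M :: nat and C where
      C1: "\<And>k. k < M \<Longrightarrow> C k \<subseteq> cbox a b" and C2: "\<And>k. k < M \<Longrightarrow> C k \<in> sets borel"
      and C3: "\<And>k x y. k < M \<Longrightarrow> x \<in> C k \<Longrightarrow> y \<in> C k \<Longrightarrow> dist x y \<le> r / 4"
      and C4: "disjoint_family_on C {..<M}" and C5: "(\<Union>k<M. C k) = cbox a b"
      using cells_exist[OF compact_cbox r4] by blast
    interpret S3: setting3 V W h \<mu> a b \<delta> M C "r / 4"
      using C1 C2 C3 C4 C5 False by unfold_locales auto
    obtain k0 where k0: "k0 \<in> S3.S" using S3.S_ne by auto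
    obtain cc where cc1: "\<And>N i. cc N i \<in> S3.S"
      and cc2: "\<And>k. k \<in> S3.S \<Longrightarrow> ((\<lambda>N. real (card {i. i < N \<and> cc N i = k}) / real N) \<longlongrightarrow> S3.p k) sequentially"
      using exists_assignment[OF S3.finite_S k0, of S3.p] S3.p_nonneg S3.sum_p by blast
    define m where "m N = ((\<Sum>i<N. \<Sum>j\<in>{i<..<N}. S3.g (cc N i) (cc N j)) + (\<Sum>i<N. S3.av (cc N i))) / (real N)\<^sup>2" for N
    define J where "J = (\<Sum>k\<in>S3.S. \<Sum>l\<in>S3.S. S3.p k * S3.p l * S3.g k l) / 2"
    have qlim: "((\<lambda>N. S3.q N (cc N) k) \<longlongrightarrow> S3.p k) sequentially" if "k \<in> S3.S" for k
      using cc2[OF that] by (simp add: S3.q_def)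
    have Irate: "Irate V W \<mu> = ereal J"
      unfolding S3.Irate_eq J_def S3.decomp by simp
    have Alim: "((\<lambda>N. (\<Sum>k\<in>S3.S. \<Sum>l\<in>S3.S. S3.q N (cc N) k * S3.q N (cc N) l * S3.g k l) / 2) \<longlongrightarrow> J) sequentially"
      unfolding J_def using qlim by (intro tendsto_intros) auto
    define K where "K = (\<Sum>k\<in>S3.S. \<bar>S3.g k k\<bar>) / 2 + S0.Vb"
    have Elim: "((\<lambda>N. m N - (\<Sum>k\<in>S3.S. \<Sum>l\<in>S3.S. S3.q N (cc N) k * S3.q N (cc N) l * S3.g k l) / 2) \<longlongrightarrow> 0) sequentially"
    proof (rule Lim_null_comparison)
      show "\<forall>\<^sub>F N in sequentially. norm (m N - (\<Sum>k\<in>S3.S. \<Sum>l\<in>S3.S. S3.q N (cc N) k * S3.q N (cc N) l * S3.g k l) / 2) \<le> K / real N"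
        using eventually_gt_at_top[of 0]
      proof eventually_elim
        case (elim N)
        show ?case using S3.m_formula[of "cc N" N] cc1 elim by (simp add: m_def K_def)
      qed
      show "((\<lambda>N. K / real N) \<longlongrightarrow> 0) sequentially"
        by (intro tendsto_divide_0[OF tendsto_const] filterlim_at_top_imp_at_infinity filterlim_real_sequentially)
    qed
    have mlim: "(m \<longlongrightarrow> J) sequentially"
      using tendsto_add[OF Elim Alim] by simp
    have dlim: "((\<lambda>N. \<Sum>k\<in>S3.S. \<bar>S3.p k - S3.q N (cc N) k\<bar>) \<longlongrightarrow> 0) sequentially"
    proof -
      have "((\<lambda>N. \<Sum>k\<in>S3.S. \<bar>S3.p k - S3.q N (cc N) k\<bar>) \<longlongrightarrow> (\<Sum>k\<in>S3.S. \<bar>S3.p k - S3.p k\<bar>)) sequentially"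
        using qlim by (intro tendsto_intros) auto
      then show ?thesis by simp
    qed
    have ev: "\<forall>\<^sub>F N in sequentially. (\<Sum>k\<in>S3.S. \<bar>S3.p k - S3.q N (cc N) k\<bar>) < r / 4"
      using order_tendstoD(2)[OF dlim r4] .
    have Nb: "((\<lambda>N. real N / \<beta> N) \<longlongrightarrow> 0) sequentially"
      by (rule N_over_beta[OF beta_pos beta_growth])
    have key: "\<forall>\<^sub>F N in sequentially. ereal (- m N - ln S3.Bd * (real N / \<beta> N))
        \<le> eln (ZQ \<beta> V W N {\<nu>. dFM \<mu> \<nu> < r}) / ereal (\<beta> N)"
      using ev eventually_gt_at_top[of 0]
    proof eventually_elim
      case (elim N)
      have hypE: "empirical N x \<in> {\<nu>. dFM \<mu> \<nu> < r}" if x: "\<forall>i<N. x i \<in> C (cc N i)" for x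
      proof -
        have "dFM \<mu> (empirical N x) \<le> 2 * (r / 4) + (\<Sum>k\<in>S3.S. \<bar>S3.p k - S3.q N (cc N) k\<bar>)"
          by (rule S3.dFM_bound[OF cc1 elim(2) x])
        then have "dFM \<mu> (empirical N x) < r" using elim(1) r_pos by linarith
        then show ?thesis by simp
      qed
      have Z: "ennreal (exp (- \<beta> N * m N)) \<le> ennreal (S3.Bd ^ N) * ZQ \<beta> V W N {\<nu>. dFM \<mu> \<nu> < r}"
        using S3.ZQ_lower[of "cc N" N, OF cc1 elim(2) hypE] S3.Y_int(2)[of "cc N" N, OF cc1]
        by (simp add: m_def)
      have "ereal (ln (exp (- \<beta> N * m N)) - ln (S3.Bd ^ N)) \<le> eln (ZQ \<beta> V W N {\<nu>. dFM \<mu> \<nu> < r})"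
        by (rule eln_lower[OF _ _ Z]) (use S3.Bd_pos in auto)
      moreover have "ln (exp (- \<beta> N * m N)) - ln (S3.Bd ^ N) = - \<beta> N * m N - real N * ln S3.Bd"
        using S3.Bd_pos by (simp add: ln_realpow)
      ultimately have "ereal (- \<beta> N * m N - real N * ln S3.Bd) \<le> eln (ZQ \<beta> V W N {\<nu>. dFM \<mu> \<nu> < r})"
        by simp
      from ereal_div_lower[OF this beta_pos[of N]]
      have "ereal ((- \<beta> N * m N - real N * ln S3.Bd) / \<beta> N) \<le> eln (ZQ \<beta> V W N {\<nu>. dFM \<mu> \<nu> < r}) / ereal (\<beta> N)" .
      moreover have "(- \<beta> N * m N - real N * ln S3.Bd) / \<beta> N = - m N - ln S3.Bd * (real N / \<beta> N)"
        using beta_pos[of N] by (simp add: field_simps)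
      ultimately show ?case by simp
    qed
    have lim: "((\<lambda>N. ereal (- m N - ln S3.Bd * (real N / \<beta> N))) \<longlongrightarrow> ereal (- J)) sequentially"
    proof -
      have "((\<lambda>N. - m N - ln S3.Bd * (real N / \<beta> N)) \<longlongrightarrow> - J - ln S3.Bd * 0) sequentially"
        by (intro tendsto_intros mlim Nb)
      then show ?thesis by (simp add: tendsto_ereal)
    qed
    have "- Irate V W \<mu> = liminf (\<lambda>N. ereal (- m N - ln S3.Bd * (real N / \<beta> N)))"
      using lim_imp_Liminf[OF trivial_limit_sequentially lim] Irate by simp
    also have "\<dots> \<le> liminf (\<lambda>N. eln (ZQ \<beta> V W N {\<nu>. dFM \<mu> \<nu> < r}) / ereal (\<beta> N))"
      by (rule Liminf_mono[OF key])
    finally show ?thesis .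
  qed
qed


end
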